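(* Let $T$ be a reflection factorization of length $\ell$ with entries reflections of $G_6$, having at least two entries in $R'$ and at least two entries in $S$. Then for any reflection $x$ whose conjugacy class (among $R_1,R_1^{-1},S$) contains some entry of $T$, the Hurwitz orbit of $T$ contains a factorization whose right-most entry is $x$ and whose first $\ell-1$ entries generate $G_6$.
   Context: Let $G_7$ be the subgroup of $GL_2(\mathbb{C})$ generated by $s=\begin{bmatrix}1&0\\0&-1\end{bmatrix}$, $t=\frac14\begin{bmatrix}(1+\sqrt3)+(-1+\sqrt3)i & (1+\sqrt3)+(-1+\sqrt3)i\\ (-1+\sqrt3)-(1+\sqrt3)i & (1-\sqrt3)+(1+\sqrt3)i\end{bmatrix}$ and $u=t^{\top}$ (presentation $\langle s,t,u\mid s^2=t^3=u^3=1,\ stu=ust=tus\rangle$, order $144$). A reflection is a linear map of $\mathbb{C}^2$ whose fixed space has dimension $1$. Let $S$ be the $G_7$-conjugacy class of $s$ (six reflections of order $2$), $R_1$ the $G_7$-conjugacy class of $t$ (four reflections of order $3$), $R_1^{-1}=\{r^{-1}:r\in R_1\}$ and $R'=R_1\cup R_1^{-1}$. Let $G_6=\langle s,t\rangle$, of order $48$; its fourteen reflections are the elements of $R_1\cup R_1^{-1}\cup S$, and $R_1$, $R_1^{-1}$, $S$ are its reflection conjugacy classes. A reflection factorization of length $\ell$ is a tuple $(r_1,\dots,r_\ell)$ of reflections; a set of entries generates the subgroup they generate. The Hurwitz move $\sigma_i$ sends $(r_1,\dots,r_\ell)$ to $(r_1,\dots,r_{i-1},r_{i+1},r_{i+1}^{-1}r_ir_{i+1},r_{i+2},\dots,r_\ell)$;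 the Hurwitz orbit of $T$ is the set of factorizations obtained from $T$ by finite sequences of Hurwitz moves. *)

theory Defs
  imports "HOL-Analysis.Analysis"
begin

type_synonym cmat = "complex^2^2"

definition mat_s :: cmat where
  "mat_s = vector [vector [1, 0], vector [0, -1]]"

definition mat_t :: cmat where
  "mat_t = (1/4) *\<^sub>R vector
     [vector [Complex (1 + sqrt 3) (-1 + sqrt 3), Complex (1 + sqrt 3) (-1 + sqrt 3)],
      vector [Complex (-1 + sqrt 3) (-(1 + sqrt 3)), Complex (1 - sqrt 3) (1 + sqrt 3)]]"

definition mat_u :: cmat where
  "mat_u = transpose mat_t"

inductive_set gen_group :: "cmat set \<Rightarrow> cmat set" for A :: "cmat set" where
  gen_one: "mat 1 \<in> gen_group A"
| gen_base: "a \<in> A \<Longrightarrow> a \<in> gen_group A"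
| gen_mult: "x \<in> gen_group A \<Longrightarrow> y \<in> gen_group A \<Longrightarrow> x ** y \<in> gen_group A"
| gen_inv: "x \<in> gen_group A \<Longrightarrow> matrix_inv x \<in> gen_group A"

definition G7 :: "cmat set" where "G7 = gen_group {mat_s, mat_t, mat_u}"
definition G6 :: "cmat set" where "G6 = gen_group {mat_s, mat_t}"

definition is_reflection :: "cmat \<Rightarrow> bool" where
  "is_reflection M \<longleftrightarrow> invertible M \<and>
     (\<exists>v::complex^2. v \<noteq> 0 \<and> {w. M *v w = w} = {c *s v | c. True})"

definition conj_class7 :: "cmat \<Rightarrow> cmat set" where
  "conj_class7 r = {g ** r ** matrix_inv g | g. g \<in> G7}"

definition S_cls :: "cmat set" where "S_cls = conj_class7 mat_s"
definition R1 :: "cmat set" where "R1 = conj_class7 mat_t"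
definition R1inv :: "cmat set" where "R1inv = matrix_inv ` R1"
definition Rprime :: "cmat set" where "Rprime = R1 \<union> R1inv"

text \<open>Hurwitz move sigma_(i+1) (0-based index i, requires i+1 < length T).\<close>
definition hurwitz :: "nat \<Rightarrow> cmat list \<Rightarrow> cmat list" where
  "hurwitz i T = T[i := T ! (i+1), i+1 := matrix_inv (T ! (i+1)) ** (T ! i) ** (T ! (i+1))]"

definition hurwitz_step :: "cmat list \<Rightarrow> cmat list \<Rightarrow> bool" where
  "hurwitz_step T T' \<longleftrightarrow> (\<exists>i. i + 1 < length T \<and> T' = hurwitz i T)"

definition hurwitz_orbit :: "cmat list \<Rightarrow> cmat list set" where
  "hurwitz_orbit T = {T'. hurwitz_step\<^sup>*\<^sup>* T T'}"

definition count_in :: "cmat set \<Rightarrow> cmat list \<Rightarrow> nat" where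
  "count_in C T = card {i. i < length T \<and> T ! i \<in> C}"

end

theory Submission
  imports Defs
begin


type_synonym ael = "int \<times> int \<times> int \<times> int \<times> int"

fun mulA :: "ael \<Rightarrow> ael \<Rightarrow> ael" where
  "mulA (k1,a1,b1,c1,d1) (k2,a2,b2,c2,d2) =
     (k1+k2, (a1*a2-b1*b2-c1*c2-d1*d2) div 2, (a1*b2+b1*a2+c1*d2-d1*c2) div 2,
      (a1*c2-b1*d2+c1*a2+d1*b2) div 2, (a1*d2+b1*c2-c1*b2+d1*a2) div 2)"

fun invA :: "ael \<Rightarrow> ael" where
  "invA (k,a,b,c,d) = (-k,a,-b,-c,-d)"

fun normA :: "ael \<Rightarrow> ael" where
  "normA (k,a,b,c,d) = (if k mod 12 < 6 then (k mod 12,a,b,c,d) else (k mod 12 - 6,-a,-b,-c,-d))"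

definition phiM :: "complex \<Rightarrow> complex \<Rightarrow> complex \<Rightarrow> complex \<Rightarrow> complex \<Rightarrow> cmat" where
  "phiM z a b c d = vector [vector [z * (a + \<i> * b) / 2, z * (c + \<i> * d) / 2],
             vector [z * (- c + \<i> * d) / 2, z * (a - \<i> * b) / 2]]"

definition phiA :: "ael \<Rightarrow> cmat" where
  "phiA g = (case g of (k,a,b,c,d) \<Rightarrow> phiM (cis (of_int k * pi / 6)) (of_int a) (of_int b) (of_int c) (of_int d))"

lemma phiM_mult:
  "phiM z1 a1 b1 c1 d1 ** phiM z2 a2 b2 c2 d2 = phiM (z1*z2) ((a1*a2-b1*b2-c1*c2-d1*d2)/2) ((a1*b2+b1*a2+c1*d2-d1*c2)/2)
      ((a1*c2-b1*d2+c1*a2+d1*b2)/2) ((a1*d2+b1*c2-c1*b2+d1*a2)/2)"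
proof -
  have i: "\<i> * \<i> = -1" by simp
  show ?thesis
  unfolding phiM_def matrix_matrix_mult_def
  apply (simp add: vec_eq_iff forall_2 sum_2 del: i_squared)
  apply (intro conjI)
  apply (simp add: field_simps del: i_squared; use i in algebra)+
  done
qed

lemma phiA_mult:
  assumes "even (a1*a2-b1*b2-c1*c2-d1*d2)" "even (a1*b2+b1*a2+c1*d2-d1*c2)"
     "even (a1*c2-b1*d2+c1*a2+d1*b2)" "even (a1*d2+b1*c2-c1*b2+d1*a2)"
  shows "phiA (k1,a1,b1,c1,d1) ** phiA (k2,a2,b2,c2,d2) = phiA (mulA (k1,a1,b1,c1,d1) (k2,a2,b2,c2,d2))"
proof -
  have e: "\<And>x::int. even x \<Longrightarrow> (of_int (x div 2)::complex) = of_int x / 2"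
    by (auto elim!: evenE)
  have c: "cis ((real_of_int k1 + real_of_int k2) * pi / 6) = cis (of_int k1 * pi / 6) * cis (of_int k2 * pi / 6)"
    by (simp add: cis_mult algebra_simps add_divide_distrib)
  show ?thesis
    unfolding phiA_def mulA.simps prod.case phiM_mult
    by (simp only: e[OF assms(1)] e[OF assms(2)] e[OF assms(3)] e[OF assms(4)] c of_int_add of_int_mult of_int_diff)
qed

definition U24 :: "(int \<times> int \<times> int \<times> int) list" where
  "U24 = [(-2,0,0,0), (-1,-1,-1,-1), (-1,-1,-1,1), (-1,-1,1,-1), (-1,-1,1,1), (-1,1,-1,-1), (-1,1,-1,1), (-1,1,1,-1), (-1,1,1,1), (0,-2,0,0), (0,0,-2,0), (0,0,0,-2), (0,0,0,2), (0,0,2,0), (0,2,0,0), (1,-1,-1,-1), (1,-1,-1,1), (1,-1,1,-1), (1,-1,1,1), (1,1,-1,-1), (1,1,-1,1), (1,1,1,-1), (1,1,1,1), (2,0,0,0)]"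

fun qok :: "int \<times> int \<times> int \<times> int \<Rightarrow> int \<times> int \<times> int \<times> int \<Rightarrow> bool" where
  "qok (a1,b1,c1,d1) (a2,b2,c2,d2) = (let A = a1*a2-b1*b2-c1*c2-d1*d2; B = a1*b2+b1*a2+c1*d2-d1*c2;
      C = a1*c2-b1*d2+c1*a2+d1*b2; D = a1*d2+b1*c2-c1*b2+d1*a2 in
      even A \<and> even B \<and> even C \<and> even D \<and> (A div 2, B div 2, C div 2, D div 2) \<in> set U24)"

lemma U24_closed: "\<forall>q1\<in>set U24. \<forall>q2\<in>set U24. qok q1 q2"
  by code_simp



definition hurA :: "nat \<Rightarrow> ael list \<Rightarrow> ael list" where
  "hurA i U = U[i := U!(i+1), i+1 := mulA (mulA (invA (U!(i+1))) (U!i)) (U!(i+1))]"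

fun applyw :: "nat list \<Rightarrow> ael list \<Rightarrow> ael list" where
  "applyw [] U = U"
| "applyw (i#w) U = applyw w (hurA i U)"

definition Sl :: "ael list" where "Sl = [(3,0,-2,0,0), (3,0,0,-2,0), (3,0,0,0,-2), (3,0,0,0,2), (3,0,0,2,0), (3,0,2,0,0)]"

definition R1l :: "ael list" where "R1l = [(2,1,-1,-1,1), (2,1,-1,1,-1), (2,1,1,-1,-1), (2,1,1,1,1)]"

definition R1il :: "ael list" where "R1il = [(4,-1,-1,-1,1), (4,-1,-1,1,-1), (4,-1,1,-1,-1), (4,-1,1,1,1)]"

definition Rpl :: "ael list" where "Rpl = R1l @ R1il"

definition W_S :: "nat list list list list list" where "W_S = [[[[[], [0,0,0,1], [0,1], [0,0,1,1], [0,0,0,1,1,1], [0,1,1]], [[1,0,0,1], [], [0,1], [0,1,1,1], [0,1,1], [1,1]], [[0,0,1,1,1,1], [1,1], [], [0,1], [0,0,1,1], [1,1,1,1]], [[1,1,1,1], [0,0,0,1], [0,0,0,1,1], [], [1,1], [0,0,0,0,0,1]], [[1,1], [0,1,1], [0,1], [0,1,1,1], [], [1,0,0,1]], [[0,1,1], [0,0,0,1], [0,1], [1,1], [1,1,1,1], []]], [[[], [0,0,0,1,1,1], [0,0,1,1], [0,1], [0,0,0,1], [0,1,1]], [[1,1], [], [0,1,1,1], [0,1], [0,1,1], [1,0,0,1]], [[1,1,1,1], [1,1], [], [0,0,0,1,1], [0,0,0,1], [0,0,0,0,0,1]], [[0,0,1,1,1,1], [0,0,1,1], [0,1], [], [1,1],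 [1,1,1,1]], [[1,0,0,1], [0,1,1], [0,1,1,1], [0,1], [], [1,1]], [[0,1,1], [1,1,1,1], [1,1], [0,1], [0,0,0,1], []]], [[[], [0,0,0,1,1,1], [0,1], [0,0,1,1], [0,0,0,1], [0,1,1]], [[1,1], [], [0,1], [0,1,1,1], [0,1,1], [1,0,0,1]], [[0,0,1,1,1,1], [0,0,1,1], [], [0,1], [1,1], [1,1,1,1]], [[1,1,1,1], [1,1], [0,0,0,1,1], [], [0,0,0,1], [0,0,0,0,0,1]], [[1,0,0,1], [0,1,1], [0,1], [0,1,1,1], [], [1,1]], [[0,1,1], [1,1,1,1], [0,1], [1,1], [0,0,0,1], []]], [[[], [0,0,0,1], [0,0,1,1], [0,1], [0,0,0,1,1,1], [0,1,1]], [[1,0,0,1], [], [0,1,1,1], [0,1], [0,1,1], [1,1]], [[1,1,1,1], [0,0,0,1], [], [0,0,0,1,1], [1,1], [0,0,0,0,0,1]], [[0,0,1,1,1,1], [1,1], [0,1], [], [0,0,1,1], [1,1,1,1]], [[1,1], [0,1,1], [0,1,1,1], [0,1], [], [1,0,0,1]], [[0,1,1], [0,0,0,1], [1,1], [0,1], [1,1,1,1], []]], [[[], [0,0,1,1], [0,0,0,1,1,1], [0,0,0,1], [0,1], [0,1,1]], [[1,1,1,1], [], [1,1], [0,0,0,1], [0,0,0,1,1], [0,0,0,0,0,1]], [[1,1], [0,1,1,1], [], [0,1,1], [0,1], [1,0,0,1]], [[1,0,0,1], [0,1,1,1], [0,1,1], [], [0,1], [1,1]], [[0,0,1,1,1,1],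 [0,1], [0,0,1,1], [1,1], [], [1,1,1,1]], [[0,1,1], [1,1], [1,1,1,1], [0,0,0,1], [0,1], []]], [[[], [0,1], [0,0,0,1], [0,0,0,1,1,1], [0,0,1,1], [0,1,1]], [[0,0,1,1,1,1], [], [1,1], [0,0,1,1], [0,1], [1,1,1,1]], [[1,0,0,1], [0,1], [], [0,1,1], [0,1,1,1], [1,1]], [[1,1], [0,1], [0,1,1], [], [0,1,1,1], [1,0,0,1]], [[1,1,1,1], [0,0,0,1,1], [0,0,0,1], [1,1], [], [0,0,0,0,0,1]], [[0,1,1], [0,1], [0,0,0,1], [1,1,1,1], [1,1], []]], [[[], [0,1], [0,0,0,1,1,1], [0,0,0,1], [0,0,1,1], [0,1,1]], [[0,0,1,1,1,1], [], [0,0,1,1], [1,1], [0,1], [1,1,1,1]], [[1,1], [0,1], [], [0,1,1], [0,1,1,1], [1,0,0,1]], [[1,0,0,1], [0,1], [0,1,1], [], [0,1,1,1], [1,1]], [[1,1,1,1], [0,0,0,1,1], [1,1], [0,0,0,1], [], [0,0,0,0,0,1]], [[0,1,1], [0,1], [1,1,1,1], [0,0,0,1], [1,1], []]], [[[], [0,0,1,1], [0,0,0,1], [0,0,0,1,1,1], [0,1], [0,1,1]], [[1,1,1,1], [], [0,0,0,1], [1,1], [0,0,0,1,1], [0,0,0,0,0,1]], [[1,0,0,1], [0,1,1,1], [], [0,1,1], [0,1], [1,1]], [[1,1], [0,1,1,1], [0,1,1], [], [0,1], [1,0,0,1]], [[0,0,1,1,1,1], [0,1], [1,1], [0,0,1,1],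 [], [1,1,1,1]], [[0,1,1], [1,1], [0,0,0,1], [1,1,1,1], [0,1], []]]], [[[[], [1,1,1,1], [1,1], [0,0,0,1], [0,0,0,0,0,1], [0,0,0,1,1]], [[0,0,1,1], [], [0,0,0,1,1,1], [0,0,0,1], [0,1,1], [0,1]], [[0,1,1,1], [1,1], [], [0,1,1], [1,0,0,1], [0,1]], [[0,1,1,1], [1,0,0,1], [0,1,1], [], [1,1], [0,1]], [[1,1], [0,1,1], [1,1,1,1], [0,0,0,1], [], [0,1]], [[0,1], [0,0,1,1,1,1], [0,0,1,1], [1,1], [1,1,1,1], []]], [[[], [0,0,1,1,1,1], [0,0,1,1], [1,1], [1,1,1,1], [0,1]], [[0,1], [], [0,0,0,1,1,1], [0,0,0,1], [0,1,1], [0,0,1,1]], [[0,1], [1,1], [], [0,1,1], [1,0,0,1], [0,1,1,1]], [[0,1], [1,0,0,1], [0,1,1], [], [1,1], [0,1,1,1]], [[0,1], [0,1,1], [1,1,1,1], [0,0,0,1], [], [1,1]], [[0,0,0,1,1], [1,1,1,1], [1,1], [0,0,0,1], [0,0,0,0,0,1], []]], [[[], [0,0,1,1,1,1], [1,1], [0,0,1,1], [1,1,1,1], [0,1]], [[0,1], [], [0,0,0,1], [0,0,0,1,1,1], [0,1,1], [0,0,1,1]], [[0,1], [1,0,0,1], [], [0,1,1], [1,1], [0,1,1,1]], [[0,1], [1,1], [0,1,1], [], [1,0,0,1], [0,1,1,1]], [[0,1], [0,1,1], [0,0,0,1], [1,1,1,1], [], [1,1]], [[0,0,0,1,1], [1,1,1,1],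 [0,0,0,1], [1,1], [0,0,0,0,0,1], []]], [[[], [1,1,1,1], [0,0,0,1], [1,1], [0,0,0,0,0,1], [0,0,0,1,1]], [[0,0,1,1], [], [0,0,0,1], [0,0,0,1,1,1], [0,1,1], [0,1]], [[0,1,1,1], [1,0,0,1], [], [0,1,1], [1,1], [0,1]], [[0,1,1,1], [1,1], [0,1,1], [], [1,0,0,1], [0,1]], [[1,1], [0,1,1], [0,0,0,1], [1,1,1,1], [], [0,1]], [[0,1], [0,0,1,1,1,1], [1,1], [0,0,1,1], [1,1,1,1], []]], [[[], [1,0,0,1], [0,1], [0,1,1,1], [1,1], [0,1,1]], [[0,0,0,1], [], [0,1], [0,0,1,1], [0,1,1], [0,0,0,1,1,1]], [[1,1], [0,0,1,1,1,1], [], [0,1], [1,1,1,1], [0,0,1,1]], [[0,0,0,1], [1,1,1,1], [0,0,0,1,1], [], [0,0,0,0,0,1], [1,1]], [[0,0,0,1], [0,1,1], [0,1], [1,1], [], [1,1,1,1]], [[0,1,1], [1,1], [0,1], [0,1,1,1], [1,0,0,1], []]], [[[], [1,1], [0,1], [0,1,1,1], [1,0,0,1], [0,1,1]], [[0,0,0,1,1,1], [], [0,1], [0,0,1,1], [0,1,1], [0,0,0,1]], [[0,0,1,1], [0,0,1,1,1,1], [], [0,1], [1,1,1,1], [1,1]], [[1,1], [1,1,1,1], [0,0,0,1,1], [], [0,0,0,0,0,1], [0,0,0,1]], [[1,1,1,1], [0,1,1], [0,1], [1,1], [], [0,0,0,1]], [[0,1,1], [1,0,0,1], [0,1], [0,1,1,1],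 [1,1], []]], [[[], [1,1], [0,1,1,1], [0,1], [1,0,0,1], [0,1,1]], [[0,0,0,1,1,1], [], [0,0,1,1], [0,1], [0,1,1], [0,0,0,1]], [[1,1], [1,1,1,1], [], [0,0,0,1,1], [0,0,0,0,0,1], [0,0,0,1]], [[0,0,1,1], [0,0,1,1,1,1], [0,1], [], [1,1,1,1], [1,1]], [[1,1,1,1], [0,1,1], [1,1], [0,1], [], [0,0,0,1]], [[0,1,1], [1,0,0,1], [0,1,1,1], [0,1], [1,1], []]], [[[], [1,0,0,1], [0,1,1,1], [0,1], [1,1], [0,1,1]], [[0,0,0,1], [], [0,0,1,1], [0,1], [0,1,1], [0,0,0,1,1,1]], [[0,0,0,1], [1,1,1,1], [], [0,0,0,1,1], [0,0,0,0,0,1], [1,1]], [[1,1], [0,0,1,1,1,1], [0,1], [], [1,1,1,1], [0,0,1,1]], [[0,0,0,1], [0,1,1], [1,1], [0,1], [], [1,1,1,1]], [[0,1,1], [1,1], [0,1,1,1], [0,1], [1,0,0,1], []]]], [[[[], [0,1], [1,1], [1,0,0,1], [0,1,1,1], [0,1,1]], [[0,0,1,1], [], [0,0,1,1,1,1], [1,1,1,1], [0,1], [1,1]], [[0,0,0,1,1,1], [0,1], [], [0,1,1], [0,0,1,1], [0,0,0,1]], [[1,1,1,1], [0,1], [0,1,1], [], [1,1], [0,0,0,1]], [[1,1], [0,0,0,1,1], [1,1,1,1], [0,0,0,0,0,1], [], [0,0,0,1]], [[0,1,1], [0,1], [1,0,0,1], [1,1], [0,1,1,1], []]], [[[], [0,1],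 [1,0,0,1], [1,1], [0,1,1,1], [0,1,1]], [[1,1], [], [0,0,1,1,1,1], [1,1,1,1], [0,1], [0,0,1,1]], [[0,0,0,1], [0,1], [], [0,1,1], [0,0,1,1], [0,0,0,1,1,1]], [[0,0,0,1], [0,1], [0,1,1], [], [1,1], [1,1,1,1]], [[0,0,0,1], [0,0,0,1,1], [1,1,1,1], [0,0,0,0,0,1], [], [1,1]], [[0,1,1], [0,1], [1,1], [1,0,0,1], [0,1,1,1], []]], [[[], [0,1,1,1], [1,1], [1,0,0,1], [0,1], [0,1,1]], [[1,1], [], [1,1,1,1], [0,0,0,0,0,1], [0,0,0,1,1], [0,0,0,1]], [[0,0,0,1,1,1], [0,0,1,1], [], [0,1,1], [0,1], [0,0,0,1]], [[1,1,1,1], [1,1], [0,1,1], [], [0,1], [0,0,0,1]], [[0,0,1,1], [0,1], [0,0,1,1,1,1], [1,1,1,1], [], [1,1]], [[0,1,1], [0,1,1,1], [1,0,0,1], [1,1], [0,1], []]], [[[], [0,1,1,1], [1,0,0,1], [1,1], [0,1], [0,1,1]], [[0,0,0,1], [], [1,1,1,1], [0,0,0,0,0,1], [0,0,0,1,1], [1,1]], [[0,0,0,1], [0,0,1,1], [], [0,1,1], [0,1], [0,0,0,1,1,1]], [[0,0,0,1], [1,1], [0,1,1], [], [0,1], [1,1,1,1]], [[1,1], [0,1], [0,0,1,1,1,1], [1,1,1,1], [], [0,0,1,1]], [[0,1,1], [0,1,1,1], [1,1], [1,0,0,1], [0,1], []]], [[[], [0,0,1,1], [0,0,1,1,1,1],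 [1,1,1,1], [1,1], [0,1]], [[0,1], [], [1,1], [1,0,0,1], [0,1,1], [0,1,1,1]], [[0,1], [0,0,0,1,1,1], [], [0,1,1], [0,0,0,1], [0,0,1,1]], [[0,1], [1,1,1,1], [0,1,1], [], [0,0,0,1], [1,1]], [[0,1], [0,1,1], [1,0,0,1], [1,1], [], [0,1,1,1]], [[0,0,0,1,1], [1,1], [1,1,1,1], [0,0,0,0,0,1], [0,0,0,1], []]], [[[], [1,1], [1,1,1,1], [0,0,0,0,0,1], [0,0,0,1], [0,0,0,1,1]], [[0,1,1,1], [], [1,1], [1,0,0,1], [0,1,1], [0,1]], [[0,0,1,1], [0,0,0,1,1,1], [], [0,1,1], [0,0,0,1], [0,1]], [[1,1], [1,1,1,1], [0,1,1], [], [0,0,0,1], [0,1]], [[0,1,1,1], [0,1,1], [1,0,0,1], [1,1], [], [0,1]], [[0,1], [0,0,1,1], [0,0,1,1,1,1], [1,1,1,1], [1,1], []]], [[[], [1,1], [0,0,1,1,1,1], [1,1,1,1], [0,0,1,1], [0,1]], [[0,1], [], [1,0,0,1], [1,1], [0,1,1], [0,1,1,1]], [[0,1], [0,0,0,1], [], [0,1,1], [0,0,0,1,1,1], [0,0,1,1]], [[0,1], [0,0,0,1], [0,1,1], [], [1,1,1,1], [1,1]], [[0,1], [0,1,1], [1,1], [1,0,0,1], [], [0,1,1,1]], [[0,0,0,1,1], [0,0,0,1], [1,1,1,1], [0,0,0,0,0,1], [1,1], []]], [[[], [0,0,0,1], [1,1,1,1], [0,0,0,0,0,1], [1,1], [0,0,0,1,1]],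 [[0,1,1,1], [], [1,0,0,1], [1,1], [0,1,1], [0,1]], [[0,0,1,1], [0,0,0,1], [], [0,1,1], [0,0,0,1,1,1], [0,1]], [[1,1], [0,0,0,1], [0,1,1], [], [1,1,1,1], [0,1]], [[0,1,1,1], [0,1,1], [1,1], [1,0,0,1], [], [0,1]], [[0,1], [1,1], [0,0,1,1,1,1], [1,1,1,1], [0,0,1,1], []]]], [[[[], [0,1,1,1], [1,1], [1,0,0,1], [0,1], [0,1,1]], [[0,0,0,1], [], [0,0,0,0,0,1], [1,1,1,1], [0,0,0,1,1], [1,1]], [[0,0,0,1], [1,1], [], [0,1,1], [0,1], [1,1,1,1]], [[0,0,0,1], [0,0,1,1], [0,1,1], [], [0,1], [0,0,0,1,1,1]], [[1,1], [0,1], [1,1,1,1], [0,0,1,1,1,1], [], [0,0,1,1]], [[0,1,1], [0,1,1,1], [1,0,0,1], [1,1], [0,1], []]], [[[], [0,1,1,1], [1,0,0,1], [1,1], [0,1], [0,1,1]], [[1,1], [], [0,0,0,0,0,1], [1,1,1,1], [0,0,0,1,1], [0,0,0,1]], [[1,1,1,1], [1,1], [], [0,1,1], [0,1], [0,0,0,1]], [[0,0,0,1,1,1], [0,0,1,1], [0,1,1], [], [0,1], [0,0,0,1]], [[0,0,1,1], [0,1], [1,1,1,1], [0,0,1,1,1,1], [], [1,1]], [[0,1,1], [0,1,1,1], [1,1], [1,0,0,1], [0,1], []]], [[[], [0,1], [1,1], [1,0,0,1], [0,1,1,1], [0,1,1]], [[1,1], [], [1,1,1,1], [0,0,1,1,1,1],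 [0,1], [0,0,1,1]], [[0,0,0,1], [0,1], [], [0,1,1], [1,1], [1,1,1,1]], [[0,0,0,1], [0,1], [0,1,1], [], [0,0,1,1], [0,0,0,1,1,1]], [[0,0,0,1], [0,0,0,1,1], [0,0,0,0,0,1], [1,1,1,1], [], [1,1]], [[0,1,1], [0,1], [1,0,0,1], [1,1], [0,1,1,1], []]], [[[], [0,1], [1,0,0,1], [1,1], [0,1,1,1], [0,1,1]], [[0,0,1,1], [], [1,1,1,1], [0,0,1,1,1,1], [0,1], [1,1]], [[1,1,1,1], [0,1], [], [0,1,1], [1,1], [0,0,0,1]], [[0,0,0,1,1,1], [0,1], [0,1,1], [], [0,0,1,1], [0,0,0,1]], [[1,1], [0,0,0,1,1], [0,0,0,0,0,1], [1,1,1,1], [], [0,0,0,1]], [[0,1,1], [0,1], [1,1], [1,0,0,1], [0,1,1,1], []]], [[[], [0,0,0,1], [0,0,0,0,0,1], [1,1,1,1], [1,1], [0,0,0,1,1]], [[0,1,1,1], [], [1,1], [1,0,0,1], [0,1,1], [0,1]], [[1,1], [0,0,0,1], [], [0,1,1], [1,1,1,1], [0,1]], [[0,0,1,1], [0,0,0,1], [0,1,1], [], [0,0,0,1,1,1], [0,1]], [[0,1,1,1], [0,1,1], [1,0,0,1], [1,1], [], [0,1]], [[0,1], [1,1], [1,1,1,1], [0,0,1,1,1,1], [0,0,1,1], []]], [[[], [1,1], [1,1,1,1], [0,0,1,1,1,1], [0,0,1,1], [0,1]], [[0,1], [], [1,1], [1,0,0,1], [0,1,1], [0,1,1,1]], [[0,1],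 [0,0,0,1], [], [0,1,1], [1,1,1,1], [1,1]], [[0,1], [0,0,0,1], [0,1,1], [], [0,0,0,1,1,1], [0,0,1,1]], [[0,1], [0,1,1], [1,0,0,1], [1,1], [], [0,1,1,1]], [[0,0,0,1,1], [0,0,0,1], [0,0,0,0,0,1], [1,1,1,1], [1,1], []]], [[[], [1,1], [0,0,0,0,0,1], [1,1,1,1], [0,0,0,1], [0,0,0,1,1]], [[0,1,1,1], [], [1,0,0,1], [1,1], [0,1,1], [0,1]], [[1,1], [1,1,1,1], [], [0,1,1], [0,0,0,1], [0,1]], [[0,0,1,1], [0,0,0,1,1,1], [0,1,1], [], [0,0,0,1], [0,1]], [[0,1,1,1], [0,1,1], [1,1], [1,0,0,1], [], [0,1]], [[0,1], [0,0,1,1], [1,1,1,1], [0,0,1,1,1,1], [1,1], []]], [[[], [0,0,1,1], [1,1,1,1], [0,0,1,1,1,1], [1,1], [0,1]], [[0,1], [], [1,0,0,1], [1,1], [0,1,1], [0,1,1,1]], [[0,1], [1,1,1,1], [], [0,1,1], [0,0,0,1], [1,1]], [[0,1], [0,0,0,1,1,1], [0,1,1], [], [0,0,0,1], [0,0,1,1]], [[0,1], [0,1,1], [1,1], [1,0,0,1], [], [0,1,1,1]], [[0,0,0,1,1], [1,1], [0,0,0,0,0,1], [1,1,1,1], [0,0,0,1], []]]], [[[[], [1,1,1,1], [1,1], [0,0,1,1], [0,0,1,1,1,1], [0,1]], [[0,1], [], [0,0,0,1], [1,1,1,1], [0,1,1], [1,1]], [[0,1], [1,1], [], [0,1,1],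 [1,0,0,1], [0,1,1,1]], [[0,1], [1,0,0,1], [0,1,1], [], [1,1], [0,1,1,1]], [[0,1], [0,1,1], [0,0,0,1], [0,0,0,1,1,1], [], [0,0,1,1]], [[0,0,0,1,1], [0,0,0,0,0,1], [0,0,0,1], [1,1], [1,1,1,1], []]], [[[], [0,0,0,0,0,1], [0,0,0,1], [1,1], [1,1,1,1], [0,0,0,1,1]], [[1,1], [], [0,0,0,1], [1,1,1,1], [0,1,1], [0,1]], [[0,1,1,1], [1,1], [], [0,1,1], [1,0,0,1], [0,1]], [[0,1,1,1], [1,0,0,1], [0,1,1], [], [1,1], [0,1]], [[0,0,1,1], [0,1,1], [0,0,0,1], [0,0,0,1,1,1], [], [0,1]], [[0,1], [1,1,1,1], [1,1], [0,0,1,1], [0,0,1,1,1,1], []]], [[[], [0,0,0,0,0,1], [1,1], [0,0,0,1], [1,1,1,1], [0,0,0,1,1]], [[1,1], [], [1,1,1,1], [0,0,0,1], [0,1,1], [0,1]], [[0,1,1,1], [1,0,0,1], [], [0,1,1], [1,1], [0,1]], [[0,1,1,1], [1,1], [0,1,1], [], [1,0,0,1], [0,1]], [[0,0,1,1], [0,1,1], [0,0,0,1,1,1], [0,0,0,1], [], [0,1]], [[0,1], [1,1,1,1], [0,0,1,1], [1,1], [0,0,1,1,1,1], []]], [[[], [1,1,1,1], [0,0,1,1], [1,1], [0,0,1,1,1,1], [0,1]], [[0,1], [], [1,1,1,1], [0,0,0,1], [0,1,1], [1,1]], [[0,1], [1,0,0,1], [], [0,1,1], [1,1], [0,1,1,1]],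 [[0,1], [1,1], [0,1,1], [], [1,0,0,1], [0,1,1,1]], [[0,1], [0,1,1], [0,0,0,1,1,1], [0,0,0,1], [], [0,0,1,1]], [[0,0,0,1,1], [0,0,0,0,0,1], [1,1], [0,0,0,1], [1,1,1,1], []]], [[[], [1,0,0,1], [0,1,1,1], [0,1], [1,1], [0,1,1]], [[1,1,1,1], [], [1,1], [0,1], [0,1,1], [0,0,0,1]], [[1,1], [0,0,0,0,0,1], [], [0,0,0,1,1], [1,1,1,1], [0,0,0,1]], [[0,0,1,1], [1,1,1,1], [0,1], [], [0,0,1,1,1,1], [1,1]], [[0,0,0,1,1,1], [0,1,1], [0,0,1,1], [0,1], [], [0,0,0,1]], [[0,1,1], [1,1], [0,1,1,1], [0,1], [1,0,0,1], []]], [[[], [1,1], [0,1,1,1], [0,1], [1,0,0,1], [0,1,1]], [[0,0,0,1], [], [1,1], [0,1], [0,1,1], [1,1,1,1]], [[0,0,0,1], [0,0,0,0,0,1], [], [0,0,0,1,1], [1,1,1,1], [1,1]], [[1,1], [1,1,1,1], [0,1], [], [0,0,1,1,1,1], [0,0,1,1]], [[0,0,0,1], [0,1,1], [0,0,1,1], [0,1], [], [0,0,0,1,1,1]], [[0,1,1], [1,0,0,1], [0,1,1,1], [0,1], [1,1], []]], [[[], [1,1], [0,1], [0,1,1,1], [1,0,0,1], [0,1,1]], [[0,0,0,1], [], [0,1], [1,1], [0,1,1], [1,1,1,1]], [[1,1], [1,1,1,1], [], [0,1], [0,0,1,1,1,1], [0,0,1,1]], [[0,0,0,1], [0,0,0,0,0,1],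 [0,0,0,1,1], [], [1,1,1,1], [1,1]], [[0,0,0,1], [0,1,1], [0,1], [0,0,1,1], [], [0,0,0,1,1,1]], [[0,1,1], [1,0,0,1], [0,1], [0,1,1,1], [1,1], []]], [[[], [1,0,0,1], [0,1], [0,1,1,1], [1,1], [0,1,1]], [[1,1,1,1], [], [0,1], [1,1], [0,1,1], [0,0,0,1]], [[0,0,1,1], [1,1,1,1], [], [0,1], [0,0,1,1,1,1], [1,1]], [[1,1], [0,0,0,0,0,1], [0,0,0,1,1], [], [1,1,1,1], [0,0,0,1]], [[0,0,0,1,1,1], [0,1,1], [0,1], [0,0,1,1], [], [0,0,0,1]], [[0,1,1], [1,1], [0,1], [0,1,1,1], [1,0,0,1], []]]], [[[[], [1,1,1,1], [1,1], [0,1], [0,0,0,1], [0,1,1]], [[1,0,0,1], [], [0,1,1,1], [0,1], [0,1,1], [1,1]], [[0,0,0,0,0,1], [1,1], [], [0,0,0,1,1], [0,0,0,1], [1,1,1,1]], [[1,1,1,1], [0,0,1,1], [0,1], [], [1,1], [0,0,1,1,1,1]], [[1,1], [0,1,1], [0,1,1,1], [0,1], [], [1,0,0,1]], [[0,1,1], [0,0,0,1,1,1], [0,0,1,1], [0,1], [0,0,0,1], []]], [[[], [0,0,0,1], [0,1], [1,1], [1,1,1,1], [0,1,1]], [[1,1], [], [0,1], [0,1,1,1], [0,1,1], [1,0,0,1]], [[1,1,1,1], [1,1], [], [0,1], [0,0,1,1], [0,0,1,1,1,1]], [[0,0,0,0,0,1], [0,0,0,1], [0,0,0,1,1], [], [1,1],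 [1,1,1,1]], [[1,0,0,1], [0,1,1], [0,1], [0,1,1,1], [], [1,1]], [[0,1,1], [0,0,0,1], [0,1], [0,0,1,1], [0,0,0,1,1,1], []]], [[[], [0,0,0,1], [1,1], [0,1], [1,1,1,1], [0,1,1]], [[1,1], [], [0,1,1,1], [0,1], [0,1,1], [1,0,0,1]], [[0,0,0,0,0,1], [0,0,0,1], [], [0,0,0,1,1], [1,1], [1,1,1,1]], [[1,1,1,1], [1,1], [0,1], [], [0,0,1,1], [0,0,1,1,1,1]], [[1,0,0,1], [0,1,1], [0,1,1,1], [0,1], [], [1,1]], [[0,1,1], [0,0,0,1], [0,0,1,1], [0,1], [0,0,0,1,1,1], []]], [[[], [1,1,1,1], [0,1], [1,1], [0,0,0,1], [0,1,1]], [[1,0,0,1], [], [0,1], [0,1,1,1], [0,1,1], [1,1]], [[1,1,1,1], [0,0,1,1], [], [0,1], [1,1], [0,0,1,1,1,1]], [[0,0,0,0,0,1], [1,1], [0,0,0,1,1], [], [0,0,0,1], [1,1,1,1]], [[1,1], [0,1,1], [0,1], [0,1,1,1], [], [1,0,0,1]], [[0,1,1], [0,0,0,1,1,1], [0,1], [0,0,1,1], [0,0,0,1], []]], [[[], [0,1], [0,0,0,1], [1,1,1,1], [1,1], [0,1,1]], [[1,1,1,1], [], [1,1], [0,0,1,1], [0,1], [0,0,1,1,1,1]], [[1,1], [0,1], [], [0,1,1], [0,1,1,1], [1,0,0,1]], [[1,0,0,1], [0,1], [0,1,1], [], [0,1,1,1], [1,1]], [[0,0,0,0,0,1], [0,0,0,1,1],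 [0,0,0,1], [1,1], [], [1,1,1,1]], [[0,1,1], [0,1], [0,0,0,1], [0,0,0,1,1,1], [0,0,1,1], []]], [[[], [1,1], [1,1,1,1], [0,0,0,1], [0,1], [0,1,1]], [[0,0,0,0,0,1], [], [1,1], [0,0,0,1], [0,0,0,1,1], [1,1,1,1]], [[1,0,0,1], [0,1,1,1], [], [0,1,1], [0,1], [1,1]], [[1,1], [0,1,1,1], [0,1,1], [], [0,1], [1,0,0,1]], [[1,1,1,1], [0,1], [0,0,1,1], [1,1], [], [0,0,1,1,1,1]], [[0,1,1], [0,0,1,1], [0,0,0,1,1,1], [0,0,0,1], [0,1], []]], [[[], [1,1], [0,0,0,1], [1,1,1,1], [0,1], [0,1,1]], [[0,0,0,0,0,1], [], [0,0,0,1], [1,1], [0,0,0,1,1], [1,1,1,1]], [[1,1], [0,1,1,1], [], [0,1,1], [0,1], [1,0,0,1]], [[1,0,0,1], [0,1,1,1], [0,1,1], [], [0,1], [1,1]], [[1,1,1,1], [0,1], [1,1], [0,0,1,1], [], [0,0,1,1,1,1]], [[0,1,1], [0,0,1,1], [0,0,0,1], [0,0,0,1,1,1], [0,1], []]], [[[], [0,1], [1,1,1,1], [0,0,0,1], [1,1], [0,1,1]], [[1,1,1,1], [], [0,0,1,1], [1,1], [0,1], [0,0,1,1,1,1]], [[1,0,0,1], [0,1], [], [0,1,1], [0,1,1,1], [1,1]], [[1,1], [0,1], [0,1,1], [], [0,1,1,1], [1,0,0,1]], [[0,0,0,0,0,1], [0,0,0,1,1], [1,1], [0,0,0,1], [],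 [1,1,1,1]], [[0,1,1], [0,1], [0,0,0,1,1,1], [0,0,0,1], [0,0,1,1], []]]]]"

definition W_R1 :: "nat list list list list list" where "W_R1 = [[[[[], [0,0,0,1,1], [0,0,1], [0,0,1,1]], [[1,1], [], [1], [0,1,1]], [[1,1], [0,0,1], [], [1]], [[1,1], [1], [1,0,0,1], []]], [[[], [1,1], [0,1,1], [1]], [[0,0,0,1,1], [], [0,0,1,1], [0,0,1]], [[1], [1,1], [], [1,0,0,1]], [[0,0,1], [1,1], [1], []]], [[[], [1], [1,1], [0,0,1]], [[1,0,0,1], [], [1,1], [1]], [[0,0,1], [0,0,1,1], [], [0,0,0,1,1]], [[1], [0,1,1], [1,1], []]], [[[], [1,0,0,1], [1], [1,1]], [[1], [], [0,0,1], [1,1]], [[0,1,1], [1], [], [1,1]], [[0,0,1,1], [0,0,1], [0,0,0,1,1], []]], [[[], [0,1,1], [0,0,0,1,1], [0,0,1,1]], [[0,1,1], [], [1,0,0,1], [1,1]], [[1,0,0,1], [1,1], [], [0,1,1]], [[0,0,0,0,1,1], [0,0,1,1], [1,1], []]], [[[], [0,1,1], [1,1], [1,0,0,1]], [[0,1,1], [], [0,0,1,1], [0,0,0,1,1]], [[0,0,1,1], [0,0,0,0,1,1], [], [1,1]], [[1,1], [1,0,0,1], [0,1,1], []]], [[[], [0,1,1], [1,0,0,1], [1,1]], [[1,1], [], [0,0,0,0,1,1], [0,0,1,1]], [[0,0,0,1,1], [0,0,1,1], [], [0,1,1]], [[1,0,0,1], [1,1], [0,1,1], []]], [[[], [1,1],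 [0,0,1,1], [0,0,0,0,1,1]], [[0,1,1], [], [1,1], [1,0,0,1]], [[1,1], [1,0,0,1], [], [0,1,1]], [[0,0,1,1], [0,0,0,1,1], [0,1,1], []]]], [[[[], [0,0,1,1], [0,0,0,1,1], [0,0,1]], [[1,1], [], [1], [1,0,0,1]], [[1,1], [0,1,1], [], [1]], [[1,1], [1], [0,0,1], []]], [[[], [1,1], [1,0,0,1], [1]], [[0,0,1,1], [], [0,0,1], [0,0,0,1,1]], [[1], [1,1], [], [0,0,1]], [[0,1,1], [1,1], [1], []]], [[[], [1], [1,1], [0,1,1]], [[0,0,1], [], [1,1], [1]], [[0,0,0,1,1], [0,0,1], [], [0,0,1,1]], [[1], [1,0,0,1], [1,1], []]], [[[], [0,0,1], [1], [1,1]], [[1], [], [0,1,1], [1,1]], [[1,0,0,1], [1], [], [1,1]], [[0,0,1], [0,0,0,1,1], [0,0,1,1], []]], [[[], [0,0,1,1], [0,1,1], [0,0,0,1,1]], [[0,0,0,0,1,1], [], [0,0,1,1], [1,1]], [[0,1,1], [1,1], [], [1,0,0,1]], [[1,0,0,1], [0,1,1], [1,1], []]], [[[], [0,0,0,0,1,1], [1,1], [0,0,1,1]], [[0,0,1,1], [], [0,0,0,1,1], [0,1,1]], [[0,1,1], [1,0,0,1], [], [1,1]], [[1,1], [0,1,1], [1,0,0,1], []]], [[[], [1,0,0,1], [0,1,1], [1,1]], [[1,1], [], [1,0,0,1], [0,1,1]], [[0,1,1], [0,0,0,1,1], [], [0,0,1,1]], [[0,0,1,1], [1,1], [0,0,0,0,1,1],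 []]], [[[], [1,1], [0,1,1], [1,0,0,1]], [[1,0,0,1], [], [1,1], [0,1,1]], [[1,1], [0,0,1,1], [], [0,0,0,0,1,1]], [[0,0,0,1,1], [0,1,1], [0,0,1,1], []]]], [[[[], [0,0,1], [0,0,1,1], [0,0,0,1,1]], [[1,1], [], [1], [0,0,1]], [[1,1], [1,0,0,1], [], [1]], [[1,1], [1], [0,1,1], []]], [[[], [1,1], [0,0,1], [1]], [[0,0,1], [], [0,0,0,1,1], [0,0,1,1]], [[1], [1,1], [], [0,1,1]], [[1,0,0,1], [1,1], [1], []]], [[[], [1], [1,1], [1,0,0,1]], [[0,1,1], [], [1,1], [1]], [[0,0,1,1], [0,0,0,1,1], [], [0,0,1]], [[1], [0,0,1], [1,1], []]], [[[], [0,1,1], [1], [1,1]], [[1], [], [1,0,0,1], [1,1]], [[0,0,1], [1], [], [1,1]], [[0,0,0,1,1], [0,0,1,1], [0,0,1], []]], [[[], [0,0,0,1,1], [0,0,1,1], [0,1,1]], [[1,0,0,1], [], [0,1,1], [1,1]], [[0,0,0,0,1,1], [1,1], [], [0,0,1,1]], [[0,1,1], [1,0,0,1], [1,1], []]], [[[], [1,0,0,1], [1,1], [0,1,1]], [[0,0,0,1,1], [], [0,1,1], [0,0,1,1]], [[1,0,0,1], [0,1,1], [], [1,1]], [[1,1], [0,0,0,0,1,1], [0,0,1,1], []]], [[[], [0,0,1,1], [0,0,0,0,1,1], [1,1]], [[1,1], [], [0,1,1], [1,0,0,1]], [[0,0,1,1], [0,1,1], [], [0,0,0,1,1]], [[0,1,1],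 [1,1], [1,0,0,1], []]], [[[], [1,1], [1,0,0,1], [0,1,1]], [[0,0,1,1], [], [1,1], [0,0,0,0,1,1]], [[1,1], [0,1,1], [], [1,0,0,1]], [[0,1,1], [0,0,1,1], [0,0,0,1,1], []]]], [[[[], [0,0,1], [0,0,1,1], [0,0,0,1,1]], [[1,1], [], [1], [0,0,1]], [[1,1], [1,0,0,1], [], [1]], [[1,1], [1], [0,1,1], []]], [[[], [1,1], [0,0,1], [1]], [[0,0,1], [], [0,0,0,1,1], [0,0,1,1]], [[1], [1,1], [], [0,1,1]], [[1,0,0,1], [1,1], [1], []]], [[[], [1], [1,1], [1,0,0,1]], [[0,1,1], [], [1,1], [1]], [[0,0,1,1], [0,0,0,1,1], [], [0,0,1]], [[1], [0,0,1], [1,1], []]], [[[], [0,1,1], [1], [1,1]], [[1], [], [1,0,0,1], [1,1]], [[0,0,1], [1], [], [1,1]], [[0,0,0,1,1], [0,0,1,1], [0,0,1], []]], [[[], [0,0,0,1,1], [0,0,1,1], [0,1,1]], [[1,0,0,1], [], [0,1,1], [1,1]], [[0,0,0,0,1,1], [1,1], [], [0,0,1,1]], [[0,1,1], [1,0,0,1], [1,1], []]], [[[], [1,0,0,1], [1,1], [0,1,1]], [[0,0,0,1,1], [], [0,1,1], [0,0,1,1]], [[1,0,0,1], [0,1,1], [], [1,1]], [[1,1], [0,0,0,0,1,1], [0,0,1,1], []]], [[[], [0,0,1,1], [0,0,0,0,1,1], [1,1]], [[1,1], [], [0,1,1], [1,0,0,1]], [[0,0,1,1], [0,1,1], [], [0,0,0,1,1]],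 [[0,1,1], [1,1], [1,0,0,1], []]], [[[], [1,1], [1,0,0,1], [0,1,1]], [[0,0,1,1], [], [1,1], [0,0,0,0,1,1]], [[1,1], [0,1,1], [], [1,0,0,1]], [[0,1,1], [0,0,1,1], [0,0,0,1,1], []]]], [[[[], [0,0,1,1], [0,0,0,1,1], [0,0,1]], [[1,1], [], [1], [1,0,0,1]], [[1,1], [0,1,1], [], [1]], [[1,1], [1], [0,0,1], []]], [[[], [1,1], [1,0,0,1], [1]], [[0,0,1,1], [], [0,0,1], [0,0,0,1,1]], [[1], [1,1], [], [0,0,1]], [[0,1,1], [1,1], [1], []]], [[[], [1], [1,1], [0,1,1]], [[0,0,1], [], [1,1], [1]], [[0,0,0,1,1], [0,0,1], [], [0,0,1,1]], [[1], [1,0,0,1], [1,1], []]], [[[], [0,0,1], [1], [1,1]], [[1], [], [0,1,1], [1,1]], [[1,0,0,1], [1], [], [1,1]], [[0,0,1], [0,0,0,1,1], [0,0,1,1], []]], [[[], [0,0,1,1], [0,1,1], [0,0,0,1,1]], [[0,0,0,0,1,1], [], [0,0,1,1], [1,1]], [[0,1,1], [1,1], [], [1,0,0,1]], [[1,0,0,1], [0,1,1], [1,1], []]], [[[], [0,0,0,0,1,1], [1,1], [0,0,1,1]], [[0,0,1,1], [], [0,0,0,1,1], [0,1,1]], [[0,1,1], [1,0,0,1], [], [1,1]], [[1,1], [0,1,1], [1,0,0,1], []]], [[[], [1,0,0,1], [0,1,1], [1,1]], [[1,1], [], [1,0,0,1], [0,1,1]], [[0,1,1], [0,0,0,1,1],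 [], [0,0,1,1]], [[0,0,1,1], [1,1], [0,0,0,0,1,1], []]], [[[], [1,1], [0,1,1], [1,0,0,1]], [[1,0,0,1], [], [1,1], [0,1,1]], [[1,1], [0,0,1,1], [], [0,0,0,0,1,1]], [[0,0,0,1,1], [0,1,1], [0,0,1,1], []]]], [[[[], [0,0,0,1,1], [0,0,1], [0,0,1,1]], [[1,1], [], [1], [0,1,1]], [[1,1], [0,0,1], [], [1]], [[1,1], [1], [1,0,0,1], []]], [[[], [1,1], [0,1,1], [1]], [[0,0,0,1,1], [], [0,0,1,1], [0,0,1]], [[1], [1,1], [], [1,0,0,1]], [[0,0,1], [1,1], [1], []]], [[[], [1], [1,1], [0,0,1]], [[1,0,0,1], [], [1,1], [1]], [[0,0,1], [0,0,1,1], [], [0,0,0,1,1]], [[1], [0,1,1], [1,1], []]], [[[], [1,0,0,1], [1], [1,1]], [[1], [], [0,0,1], [1,1]], [[0,1,1], [1], [], [1,1]], [[0,0,1,1], [0,0,1], [0,0,0,1,1], []]], [[[], [0,1,1], [0,0,0,1,1], [0,0,1,1]], [[0,1,1], [], [1,0,0,1], [1,1]], [[1,0,0,1], [1,1], [], [0,1,1]], [[0,0,0,0,1,1], [0,0,1,1], [1,1], []]], [[[], [0,1,1], [1,1], [1,0,0,1]], [[0,1,1], [], [0,0,1,1], [0,0,0,1,1]], [[0,0,1,1], [0,0,0,0,1,1], [], [1,1]], [[1,1], [1,0,0,1], [0,1,1], []]], [[[], [0,1,1], [1,0,0,1], [1,1]], [[1,1], [], [0,0,0,0,1,1], [0,0,1,1]],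 [[0,0,0,1,1], [0,0,1,1], [], [0,1,1]], [[1,0,0,1], [1,1], [0,1,1], []]], [[[], [1,1], [0,0,1,1], [0,0,0,0,1,1]], [[0,1,1], [], [1,1], [1,0,0,1]], [[1,1], [1,0,0,1], [], [0,1,1]], [[0,0,1,1], [0,0,0,1,1], [0,1,1], []]]]]"

definition W_R1i :: "nat list list list list list" where "W_R1i = [[[[[], [0,1,1], [0,0,1,1], [0,0,0,1,1]], [[0,1,1], [], [1,1], [1,0,0,1]], [[0,0,0,0,1,1], [0,0,1,1], [], [1,1]], [[1,0,0,1], [1,1], [0,1,1], []]], [[[], [0,1,1], [1,0,0,1], [1,1]], [[0,1,1], [], [0,0,0,1,1], [0,0,1,1]], [[1,1], [1,0,0,1], [], [0,1,1]], [[0,0,1,1], [0,0,0,0,1,1], [1,1], []]], [[[], [1,1], [0,0,0,0,1,1], [0,0,1,1]], [[0,1,1], [], [1,0,0,1], [1,1]], [[0,0,1,1], [0,0,0,1,1], [], [0,1,1]], [[1,1], [1,0,0,1], [0,1,1], []]], [[[], [0,1,1], [1,1], [1,0,0,1]], [[1,1], [], [0,0,1,1], [0,0,0,0,1,1]], [[1,0,0,1], [1,1], [], [0,1,1]], [[0,0,0,1,1], [0,0,1,1], [0,1,1], []]], [[[], [0,0,0,1,1], [0,0,1,1], [0,0,1]], [[1,1], [], [0,1,1], [1]], [[1,1], [1], [], [1,0,0,1]], [[1,1], [0,0,1], [1], []]], [[[], [1,1], [1], [0,1,1]], [[0,0,0,1,1], [], [0,0,1], [0,0,1,1]], [[0,0,1],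 [1,1], [], [1]], [[1], [1,1], [1,0,0,1], []]], [[[], [1,0,0,1], [1,1], [1]], [[1], [], [1,1], [0,0,1]], [[0,0,1,1], [0,0,1], [], [0,0,0,1,1]], [[0,1,1], [1], [1,1], []]], [[[], [1], [0,0,1], [1,1]], [[1,0,0,1], [], [1], [1,1]], [[1], [0,1,1], [], [1,1]], [[0,0,1], [0,0,1,1], [0,0,0,1,1], []]]], [[[[], [0,0,0,1,1], [0,1,1], [0,0,1,1]], [[1,0,0,1], [], [1,1], [0,1,1]], [[0,1,1], [1,0,0,1], [], [1,1]], [[0,0,0,0,1,1], [1,1], [0,0,1,1], []]], [[[], [1,0,0,1], [0,1,1], [1,1]], [[0,0,0,1,1], [], [0,0,1,1], [0,1,1]], [[1,1], [0,0,0,0,1,1], [], [0,0,1,1]], [[1,0,0,1], [0,1,1], [1,1], []]], [[[], [1,1], [0,1,1], [1,0,0,1]], [[0,0,1,1], [], [0,0,0,0,1,1], [1,1]], [[0,1,1], [0,0,1,1], [], [0,0,0,1,1]], [[1,1], [0,1,1], [1,0,0,1], []]], [[[], [0,0,1,1], [1,1], [0,0,0,0,1,1]], [[1,1], [], [1,0,0,1], [0,1,1]], [[0,1,1], [1,1], [], [1,0,0,1]], [[0,0,1,1], [0,1,1], [0,0,0,1,1], []]], [[[], [0,0,1], [0,0,0,1,1], [0,0,1,1]], [[1,1], [], [0,0,1], [1]], [[1,1], [1], [], [0,1,1]], [[1,1], [1,0,0,1], [1], []]], [[[], [1,1], [1], [0,0,1]], [[0,0,1], [], [0,0,1,1], [0,0,0,1,1]],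 [[1,0,0,1], [1,1], [], [1]], [[1], [1,1], [0,1,1], []]], [[[], [0,1,1], [1,1], [1]], [[1], [], [1,1], [1,0,0,1]], [[0,0,0,1,1], [0,0,1,1], [], [0,0,1]], [[0,0,1], [1], [1,1], []]], [[[], [1], [1,0,0,1], [1,1]], [[0,1,1], [], [1], [1,1]], [[1], [0,0,1], [], [1,1]], [[0,0,1,1], [0,0,0,1,1], [0,0,1], []]]], [[[[], [0,0,1,1], [0,0,0,1,1], [0,1,1]], [[0,0,0,0,1,1], [], [1,1], [0,0,1,1]], [[1,0,0,1], [0,1,1], [], [1,1]], [[0,1,1], [1,1], [1,0,0,1], []]], [[[], [0,0,0,0,1,1], [0,0,1,1], [1,1]], [[0,0,1,1], [], [0,1,1], [0,0,0,1,1]], [[1,1], [0,1,1], [], [1,0,0,1]], [[0,1,1], [1,0,0,1], [1,1], []]], [[[], [1,1], [1,0,0,1], [0,1,1]], [[1,0,0,1], [], [0,1,1], [1,1]], [[0,0,0,1,1], [0,1,1], [], [0,0,1,1]], [[1,1], [0,0,1,1], [0,0,0,0,1,1], []]], [[[], [1,0,0,1], [1,1], [0,1,1]], [[1,1], [], [0,1,1], [1,0,0,1]], [[0,0,1,1], [1,1], [], [0,0,0,0,1,1]], [[0,1,1], [0,0,0,1,1], [0,0,1,1], []]], [[[], [0,0,1,1], [0,0,1], [0,0,0,1,1]], [[1,1], [], [1,0,0,1], [1]], [[1,1], [1], [], [0,0,1]], [[1,1], [0,1,1], [1], []]], [[[], [1,1], [1], [1,0,0,1]], [[0,0,1,1],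 [], [0,0,0,1,1], [0,0,1]], [[0,1,1], [1,1], [], [1]], [[1], [1,1], [0,0,1], []]], [[[], [0,0,1], [1,1], [1]], [[1], [], [1,1], [0,1,1]], [[0,0,1], [0,0,0,1,1], [], [0,0,1,1]], [[1,0,0,1], [1], [1,1], []]], [[[], [1], [0,1,1], [1,1]], [[0,0,1], [], [1], [1,1]], [[1], [1,0,0,1], [], [1,1]], [[0,0,0,1,1], [0,0,1], [0,0,1,1], []]]], [[[[], [0,0,1,1], [0,0,0,1,1], [0,1,1]], [[0,0,0,0,1,1], [], [1,1], [0,0,1,1]], [[1,0,0,1], [0,1,1], [], [1,1]], [[0,1,1], [1,1], [1,0,0,1], []]], [[[], [0,0,0,0,1,1], [0,0,1,1], [1,1]], [[0,0,1,1], [], [0,1,1], [0,0,0,1,1]], [[1,1], [0,1,1], [], [1,0,0,1]], [[0,1,1], [1,0,0,1], [1,1], []]], [[[], [1,1], [1,0,0,1], [0,1,1]], [[1,0,0,1], [], [0,1,1], [1,1]], [[0,0,0,1,1], [0,1,1], [], [0,0,1,1]], [[1,1], [0,0,1,1], [0,0,0,0,1,1], []]], [[[], [1,0,0,1], [1,1], [0,1,1]], [[1,1], [], [0,1,1], [1,0,0,1]], [[0,0,1,1], [1,1], [], [0,0,0,0,1,1]], [[0,1,1], [0,0,0,1,1], [0,0,1,1], []]], [[[], [0,0,1,1], [0,0,1], [0,0,0,1,1]], [[1,1], [], [1,0,0,1], [1]], [[1,1], [1], [], [0,0,1]], [[1,1], [0,1,1], [1], []]], [[[], [1,1], [1], [1,0,0,1]],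 [[0,0,1,1], [], [0,0,0,1,1], [0,0,1]], [[0,1,1], [1,1], [], [1]], [[1], [1,1], [0,0,1], []]], [[[], [0,0,1], [1,1], [1]], [[1], [], [1,1], [0,1,1]], [[0,0,1], [0,0,0,1,1], [], [0,0,1,1]], [[1,0,0,1], [1], [1,1], []]], [[[], [1], [0,1,1], [1,1]], [[0,0,1], [], [1], [1,1]], [[1], [1,0,0,1], [], [1,1]], [[0,0,0,1,1], [0,0,1], [0,0,1,1], []]]], [[[[], [0,0,0,1,1], [0,1,1], [0,0,1,1]], [[1,0,0,1], [], [1,1], [0,1,1]], [[0,1,1], [1,0,0,1], [], [1,1]], [[0,0,0,0,1,1], [1,1], [0,0,1,1], []]], [[[], [1,0,0,1], [0,1,1], [1,1]], [[0,0,0,1,1], [], [0,0,1,1], [0,1,1]], [[1,1], [0,0,0,0,1,1], [], [0,0,1,1]], [[1,0,0,1], [0,1,1], [1,1], []]], [[[], [1,1], [0,1,1], [1,0,0,1]], [[0,0,1,1], [], [0,0,0,0,1,1], [1,1]], [[0,1,1], [0,0,1,1], [], [0,0,0,1,1]], [[1,1], [0,1,1], [1,0,0,1], []]], [[[], [0,0,1,1], [1,1], [0,0,0,0,1,1]], [[1,1], [], [1,0,0,1], [0,1,1]], [[0,1,1], [1,1], [], [1,0,0,1]], [[0,0,1,1], [0,1,1], [0,0,0,1,1], []]], [[[], [0,0,1], [0,0,0,1,1], [0,0,1,1]], [[1,1], [], [0,0,1], [1]], [[1,1], [1], [], [0,1,1]], [[1,1], [1,0,0,1], [1], []]], [[[],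 [1,1], [1], [0,0,1]], [[0,0,1], [], [0,0,1,1], [0,0,0,1,1]], [[1,0,0,1], [1,1], [], [1]], [[1], [1,1], [0,1,1], []]], [[[], [0,1,1], [1,1], [1]], [[1], [], [1,1], [1,0,0,1]], [[0,0,0,1,1], [0,0,1,1], [], [0,0,1]], [[0,0,1], [1], [1,1], []]], [[[], [1], [1,0,0,1], [1,1]], [[0,1,1], [], [1], [1,1]], [[1], [0,0,1], [], [1,1]], [[0,0,1,1], [0,0,0,1,1], [0,0,1], []]]], [[[[], [0,1,1], [0,0,1,1], [0,0,0,1,1]], [[0,1,1], [], [1,1], [1,0,0,1]], [[0,0,0,0,1,1], [0,0,1,1], [], [1,1]], [[1,0,0,1], [1,1], [0,1,1], []]], [[[], [0,1,1], [1,0,0,1], [1,1]], [[0,1,1], [], [0,0,0,1,1], [0,0,1,1]], [[1,1], [1,0,0,1], [], [0,1,1]], [[0,0,1,1], [0,0,0,0,1,1], [1,1], []]], [[[], [1,1], [0,0,0,0,1,1], [0,0,1,1]], [[0,1,1], [], [1,0,0,1], [1,1]], [[0,0,1,1], [0,0,0,1,1], [], [0,1,1]], [[1,1], [1,0,0,1], [0,1,1], []]], [[[], [0,1,1], [1,1], [1,0,0,1]], [[1,1], [], [0,0,1,1], [0,0,0,0,1,1]], [[1,0,0,1], [1,1], [], [0,1,1]], [[0,0,0,1,1], [0,0,1,1], [0,1,1], []]], [[[], [0,0,0,1,1], [0,0,1,1], [0,0,1]], [[1,1], [], [0,1,1], [1]], [[1,1], [1], [], [1,0,0,1]], [[1,1],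 [0,0,1], [1], []]], [[[], [1,1], [1], [0,1,1]], [[0,0,0,1,1], [], [0,0,1], [0,0,1,1]], [[0,0,1], [1,1], [], [1]], [[1], [1,1], [1,0,0,1], []]], [[[], [1,0,0,1], [1,1], [1]], [[1], [], [1,1], [0,0,1]], [[0,0,1,1], [0,0,1], [], [0,0,0,1,1]], [[0,1,1], [1], [1,1], []]], [[[], [1], [0,0,1], [1,1]], [[1,0,0,1], [], [1], [1,1]], [[1], [0,1,1], [], [1,1]], [[0,0,1], [0,0,1,1], [0,0,0,1,1], []]]]]"

definition WF :: "(nat list \<times> nat list) list list" where "WF = [[([0],[0,1,0]), ([0],[1]), ([0],[3,0,1,0,1]), ([0],[1,0,1,0,3]), ([0],[0,3,0]), ([0],[3]), ([0],[1,0,3,0,3]), ([0],[3,0,3,0,1])], [([3,0,1],[3,0,1,0,1]), ([0,3,0,1,0],[1]), ([0,3,0,1,0],[1,0,1,0,3]), ([3,0,1],[0,1,0]), ([1,0,3],[1,0,3,0,3]), ([0,1,0,3,0],[3]), ([0,1,0,3,0],[3,0,3,0,1]), ([1,0,3],[0,3,0])], [([0,1,0,3,0],[1,0,1,0,3]), ([1,0,3],[1]), ([0,1,0,3,0],[0,1,0]), ([1,0,3],[3,0,1,0,1]), ([0,3,0,1,0],[3,0,3,0,1]), ([3,0,1],[3]), ([0,3,0,1,0],[0,3,0]), ([3,0,1],[1,0,3,0,3])], [([1,0,3],[1,0,1,0,3]), ([0,1,0,3,0],[1]), ([1,0,3],[0,1,0]), ([0,1,0,3,0],[3,0,1,0,1]),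 ([3,0,1],[3,0,3,0,1]), ([0,3,0,1,0],[3]), ([3,0,1],[0,3,0]), ([0,3,0,1,0],[1,0,3,0,3])], [([0,3,0,1,0],[3,0,1,0,1]), ([3,0,1],[1]), ([3,0,1],[1,0,1,0,3]), ([0,3,0,1,0],[0,1,0]), ([0,1,0,3,0],[1,0,3,0,3]), ([1,0,3],[3]), ([1,0,3],[3,0,3,0,1]), ([0,1,0,3,0],[0,3,0])], [([3,0,1,0,3,0,1],[0,1,0]), ([3,0,1,0,3,0,1],[1]), ([3,0,1,0,3,0,1],[3,0,1,0,1]), ([3,0,1,0,3,0,1],[1,0,1,0,3]), ([3,0,1,0,3,0,1],[0,3,0]), ([3,0,1,0,3,0,1],[3]), ([3,0,1,0,3,0,1],[1,0,3,0,3]), ([3,0,1,0,3,0,1],[3,0,3,0,1])]]"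

definition good :: "nat list \<Rightarrow> ael \<Rightarrow> ael \<Rightarrow> ael \<Rightarrow> ael \<Rightarrow> bool" where
  "good w b c y x = (let V = applyw w [b,c,y] in (\<forall>i\<in>set w. i < 2) \<and> normA (V!2) = x \<and>
     ((normA (V!0) \<in> set Sl \<and> normA (V!1) \<in> set Rpl) \<or> (normA (V!0) \<in> set Rpl \<and> normA (V!1) \<in> set Sl)))"

definition chk :: "ael list \<Rightarrow> nat list list list list list \<Rightarrow> bool" where
  "chk Cl W = list_all2 (\<lambda>b Wb. list_all2 (\<lambda>c Wc. list_all2 (\<lambda>y Wy. list_all2 (\<lambda>x w. good w b c y x) Cl Wy) Cl Wc) Rpl Wb) Sl W"

lemma chk_S: "chk Sl W_S" by code_simp
lemma chk_R1: "chk R1l W_R1" by code_simp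
lemma chk_R1i: "chk R1il W_R1i" by code_simp

fun valid :: "ael \<Rightarrow> bool" where
  "valid (k,a,b,c,d) = ((a,b,c,d) \<in> set U24)"

lemma U24_inv: "\<forall>q\<in>set U24. (case q of (a,b,c,d) \<Rightarrow> a*a+b*b+c*c+d*d = 4 \<and> (a,-b,-c,-d) \<in> set U24)"
  by code_simp

definition s_hat :: ael where "s_hat = (3,0,-2,0,0)"
definition t_hat :: ael where "t_hat = (2,1,-1,1,-1)"
definition u_hat :: ael where "u_hat = (2,1,-1,-1,-1)"

definition conjQ :: "int \<times> int \<times> int \<times> int \<Rightarrow> ael \<Rightarrow> ael" where
  "conjQ q h = mulA (mulA (0,q) h) (invA (0,q))"

lemma conj_chk: "\<forall>q\<in>set U24. normA (conjQ q t_hat) \<in> set R1l \<and> normA (conjQ q s_hat) \<in> set Sl"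
  by code_simp

lemma inv_chk: "\<forall>r\<in>set R1l. normA (invA r) \<in> set R1il"
  by code_simp

lemma valid_chk: "\<forall>g\<in>set (Sl @ R1l @ R1il @ [s_hat, t_hat, u_hat]). valid g"
  by code_simp

fun letter :: "ael \<Rightarrow> ael \<Rightarrow> nat \<Rightarrow> ael" where
  "letter a c l = (if l = 0 then a else if l = 1 then c else if l = 2 then invA a else invA c)"

fun evw :: "ael \<Rightarrow> ael \<Rightarrow> nat list \<Rightarrow> ael" where
  "evw a c [] = (0,2,0,0,0)"
| "evw a c (l#w) = mulA (letter a c l) (evw a c w)"

lemma F1_chk: "list_all2 (\<lambda>a row. list_all2 (\<lambda>c wp. normA (evw a c (fst wp)) = s_hat \<and> normA (evw a c (snd wp)) = t_hat) Rpl row) Sl WF"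
  by code_simp

lemma trace_chk: "(\<forall>g\<in>set Sl. fst (snd g) = 0) \<and> (\<forall>g\<in>set Rpl. fst (snd g) \<noteq> 0)"
  by code_simp



lemma valid_mul:
  assumes "valid g" "valid h"
  shows "valid (mulA g h) \<and> phiA g ** phiA h = phiA (mulA g h)"
proof -
  obtain k1 a1 b1 c1 d1 where g: "g = (k1,a1,b1,c1,d1)" by (cases g) auto
  obtain k2 a2 b2 c2 d2 where h: "h = (k2,a2,b2,c2,d2)" by (cases h) auto
  have m1: "(a1,b1,c1,d1) \<in> set U24" using assms(1) g by simp
  have m2: "(a2,b2,c2,d2) \<in> set U24" using assms(2) h by simp
  have q: "qok (a1,b1,c1,d1) (a2,b2,c2,d2)" using U24_closed m1 m2 by blast
  then have e1: "even (a1*a2-b1*b2-c1*c2-d1*d2)" and e2: "even (a1*b2+b1*a2+c1*d2-d1*c2)"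
     and e3: "even (a1*c2-b1*d2+c1*a2+d1*b2)" and e4: "even (a1*d2+b1*c2-c1*b2+d1*a2)"
     and m: "((a1*a2-b1*b2-c1*c2-d1*d2) div 2, (a1*b2+b1*a2+c1*d2-d1*c2) div 2,
      (a1*c2-b1*d2+c1*a2+d1*b2) div 2, (a1*d2+b1*c2-c1*b2+d1*a2) div 2) \<in> set U24"
    by (simp_all only: qok.simps Let_def)
  have "phiA g ** phiA h = phiA (mulA g h)" unfolding g h by (rule phiA_mult[OF e1 e2 e3 e4])
  moreover have "valid (mulA g h)" unfolding g h mulA.simps valid.simps by (rule m)
  ultimately show ?thesis by simp
qed

lemma phiA_one: "phiA (0,2,0,0,0) = mat 1"
  unfolding phiA_def phiM_def by (simp add: vec_eq_iff forall_2 mat_def)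

lemma valid_one: "valid (0,2,0,0,0)"
  by (simp add: U24_def)

lemma valid_inv:
  assumes "valid g"
  shows "valid (invA g) \<and> phiA g ** phiA (invA g) = mat 1 \<and> phiA (invA g) ** phiA g = mat 1"
proof -
  obtain k a b c d where g: "g = (k,a,b,c,d)" by (cases g) auto
  have n: "a*a+b*b+c*c+d*d = 4" and v: "(a,-b,-c,-d) \<in> set U24"
    using U24_inv assms g by auto
  have 1: "phiA g ** phiA (invA g) = phiA (mulA g (invA g))"
    unfolding g invA.simps by (rule phiA_mult) (use n in \<open>simp_all add: algebra_simps\<close>)
  have 2: "phiA (invA g) ** phiA g = phiA (mulA (invA g) g)"
    unfolding g invA.simps by (rule phiA_mult) (use n in \<open>simp_all add: algebra_simps\<close>)
  have 3: "mulA g (invA g) = (0,2,0,0,0)" "mulA (invA g) g = (0,2,0,0,0)"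
    using n by (simp_all add: g algebra_simps)
  show ?thesis using 1 2 3 v g phiA_one by simp
qed

lemma cis_period: "cis (of_int k * pi / 6) = cis (of_int (k mod 12) * pi / 6)"
proof -
  have "of_int k * pi / 6 = of_int (k mod 12) * pi / 6 + 2 * pi * of_int (k div 12)"
  proof -
    have "k = k mod 12 + 12 * (k div 12)" by simp
    then have "real_of_int k = of_int (k mod 12) + 12 * of_int (k div 12)"
      by (metis of_int_add of_int_mult of_int_numeral)
    then show ?thesis by (simp add: field_simps)
  qed
  then have "cis (of_int k * pi / 6) = cis (of_int (k mod 12) * pi / 6 + 2 * pi * of_int (k div 12))"
    by (rule arg_cong)
  also have "\<dots> = cis (of_int (k mod 12) * pi / 6) * cis (2 * pi * of_int (k div 12))"
    by (rule cis_mult[symmetric])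
  also have "cis (2 * pi * of_int (k div 12)) = 1" by simp
  finally show ?thesis by simp
qed

lemma phiA_norm: "phiA (normA g) = phiA g"
proof -
  obtain k a b c d where g: "g = (k,a,b,c,d)" by (cases g) auto
  show ?thesis
  proof (cases "k mod 12 < 6")
    case True
    then show ?thesis by (simp add: g phiA_def cis_period[of k])
  next
    case False
    have "cis (of_int (k mod 12 - 6) * pi / 6) = - cis (of_int (k mod 12) * pi / 6)"
    proof -
      have "of_int (k mod 12 - 6) * pi / 6 = of_int (k mod 12) * pi / 6 + (- pi)"
        by (simp add: field_simps)
      then have "cis (of_int (k mod 12 - 6) * pi / 6) = cis (of_int (k mod 12) * pi / 6 + (- pi))"
        by (rule arg_cong)
      also have "\<dots> = cis (of_int (k mod 12) * pi / 6) * cis (- pi)"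
        by (rule cis_mult[symmetric])
      also have "cis (- pi) = -1" by (simp add: complex_eq_iff)
      finally show ?thesis by simp
    qed
    moreover have "phiM (-z) (-a) (-b) (-c) (-d) = phiM z a b c d" for z a b c d
      unfolding phiM_def by (simp add: algebra_simps)
    ultimately show ?thesis using False
      by (simp add: g phiA_def cis_period[of k])
  qed
qed

lemma matrix_inv_unique':
  fixes A B :: "'a::semiring_1^'n^'n"
  assumes "A ** B = mat 1" "B ** A = mat 1"
  shows "matrix_inv A = B"
proof -
  have ex: "\<exists>A'. A ** A' = mat 1 \<and> A' ** A = mat 1" using assms by blast
  have M: "A ** matrix_inv A = mat 1 \<and> matrix_inv A ** A = mat 1"
    unfolding matrix_inv_def by (rule someI_ex[OF ex])
  have "B = (matrix_inv A ** A) ** B" using M by simp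
  also have "\<dots> = matrix_inv A" using assms(1) by (simp flip: matrix_mul_assoc)
  finally show ?thesis by simp
qed

lemma invertible_inv:
  fixes A :: "'a::semiring_1^'n^'n"
  assumes "invertible A"
  shows "A ** matrix_inv A = mat 1 \<and> matrix_inv A ** A = mat 1"
  using assms unfolding invertible_def matrix_inv_def by (rule someI_ex)

lemma phiA_inv: "valid g \<Longrightarrow> matrix_inv (phiA g) = phiA (invA g)"
  using valid_inv by (blast intro: matrix_inv_unique')

lemma phiA_invertible: "valid g \<Longrightarrow> invertible (phiA g)"
  using valid_inv unfolding invertible_def by blast

lemma gen_phi:
  assumes "\<forall>a\<in>A. \<exists>g. valid g \<and> a = phiA g" "M \<in> gen_group A"
  shows "\<exists>g. valid g \<and> M = phiA g"
  using assms(2)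
proof induction
  case gen_one
  then show ?case using valid_one phiA_one by metis
next
  case (gen_base a)
  then show ?case using assms(1) by blast
next
  case (gen_mult x y)
  then show ?case using valid_mul by metis
next
  case (gen_inv x)
  then show ?case using valid_inv phiA_inv by metis
qed

lemma gen_group_sub:
  assumes "A \<subseteq> gen_group B"
  shows "gen_group A \<subseteq> gen_group B"
proof
  fix x assume "x \<in> gen_group A"
  then show "x \<in> gen_group B"
    by induction (use assms in \<open>auto intro: gen_group.intros\<close>)
qed

lemma cis_pi_half': "cis (pi / 2) = \<i>"
  by (simp add: complex_eq_iff)

lemma mat_s_phi: "mat_s = phiA s_hat"
proof -
  have "cis (3 * pi / 6) = \<i>" using cis_pi_half' by (simp add: field_simps)
  then show ?thesis
    unfolding mat_s_def phiA_def phiM_def s_hat_def by (simp add: vec_eq_iff forall_2)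
qed

lemma cis_pi_third: "cis (2 * pi / 6) = Complex (1/2) (sqrt 3 / 2)"
proof -
  have "2 * pi / 6 = pi / 3" by simp
  then show ?thesis by (simp add: complex_eq_iff cos_60 sin_60)
qed

lemma mat_t_phi: "mat_t = phiA t_hat"
  unfolding mat_t_def phiA_def phiM_def t_hat_def
  by (simp add: vec_eq_iff forall_2 cis_pi_third complex_eq_iff field_simps cos_60 sin_60)

lemma mat_u_phi: "mat_u = phiA u_hat"
  unfolding mat_u_def mat_t_def phiA_def phiM_def u_hat_def transpose_def
  by (simp add: vec_eq_iff forall_2 cis_pi_third complex_eq_iff field_simps cos_60 sin_60)

lemma valid_hats: "valid s_hat" "valid t_hat" "valid u_hat"
  using valid_chk by simp_all

lemma G7_phi: "M \<in> G7 \<Longrightarrow> \<exists>g. valid g \<and> M = phiA g"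
proof -
  assume "M \<in> G7"
  moreover have "\<forall>a\<in>{mat_s,mat_t,mat_u}. \<exists>g. valid g \<and> a = phiA g"
    using valid_hats mat_s_phi mat_t_phi mat_u_phi by blast
  ultimately show ?thesis unfolding G7_def using gen_phi by blast
qed

lemma G6_sub_G7: "G6 \<subseteq> G7"
  unfolding G6_def G7_def by (rule gen_group_sub) (auto intro: gen_base)

lemma G6_phi: "M \<in> G6 \<Longrightarrow> \<exists>g. valid g \<and> M = phiA g"
  using G6_sub_G7 G7_phi by blast

lemma G7_invertible: "M \<in> G7 \<Longrightarrow> invertible M"
  using G7_phi phiA_invertible by blast

lemma conj_k: "mulA (mulA (k,q) h) (invA (k,q)) = conjQ q h"
  by (cases q; cases h) (simp add: conjQ_def)

lemma conj7_phi:
  assumes "h \<in> G7" "valid r"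
  shows "\<exists>q\<in>set U24. h ** phiA r ** matrix_inv h = phiA (conjQ q r)"
proof -
  obtain g where g: "valid g" "h = phiA g" using G7_phi assms(1) by blast
  obtain k q where kq: "g = (k,q)" by (cases g)
  have "h ** phiA r ** matrix_inv h = phiA (mulA (mulA g r) (invA g))"
    using g assms(2) valid_mul valid_inv phiA_inv by metis
  also have "\<dots> = phiA (conjQ q r)" using conj_k kq by simp
  finally show ?thesis using g(1) kq by (cases q) auto
qed

lemma R1_sub: "M \<in> R1 \<Longrightarrow> \<exists>g\<in>set R1l. M = phiA g"
proof -
  assume "M \<in> R1"
  then obtain h where h: "h \<in> G7" "M = h ** mat_t ** matrix_inv h"
    unfolding R1_def conj_class7_def by blast
  then obtain q where q: "q \<in> set U24" "M = phiA (conjQ q t_hat)"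
    using conj7_phi[OF h(1) valid_hats(2)] mat_t_phi by auto
  then show ?thesis using conj_chk phiA_norm by metis
qed

lemma S_sub: "M \<in> S_cls \<Longrightarrow> \<exists>g\<in>set Sl. M = phiA g"
proof -
  assume "M \<in> S_cls"
  then obtain h where h: "h \<in> G7" "M = h ** mat_s ** matrix_inv h"
    unfolding S_cls_def conj_class7_def by blast
  then obtain q where q: "q \<in> set U24" "M = phiA (conjQ q s_hat)"
    using conj7_phi[OF h(1) valid_hats(1)] mat_s_phi by auto
  then show ?thesis using conj_chk phiA_norm by metis
qed

lemma R1inv_sub: "M \<in> R1inv \<Longrightarrow> \<exists>g\<in>set R1il. M = phiA g"
proof -
  assume "M \<in> R1inv"
  then obtain N where N: "N \<in> R1" "M = matrix_inv N" unfolding R1inv_def by blast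
  then obtain r where r: "r \<in> set R1l" "N = phiA r" using R1_sub by blast
  have "valid r" using r(1) valid_chk by simp
  then have "M = phiA (invA r)" using N r phiA_inv by simp
  then show ?thesis using inv_chk r(1) phiA_norm by metis
qed

lemma Rprime_sub: "M \<in> Rprime \<Longrightarrow> \<exists>g\<in>set Rpl. M = phiA g"
  unfolding Rprime_def Rpl_def using R1_sub R1inv_sub by fastforce

definition conjclosed :: "cmat set \<Rightarrow> bool" where
  "conjclosed C \<longleftrightarrow> (\<forall>r\<in>C. \<forall>g\<in>G6. matrix_inv g ** r ** g \<in> C)"

lemma G6_conjclosed: "conjclosed G6"
  unfolding conjclosed_def G6_def by (auto intro: gen_group.intros)

lemma inv_mult_inv:
  fixes g h :: cmat
  assumes "invertible g" "invertible h"
  shows "matrix_inv (g ** h) = matrix_inv h ** matrix_inv g"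
proof (rule matrix_inv_unique')
  have g: "g ** matrix_inv g = mat 1" "matrix_inv g ** g = mat 1" using invertible_inv assms(1) by blast+
  have h: "h ** matrix_inv h = mat 1" "matrix_inv h ** h = mat 1" using invertible_inv assms(2) by blast+
  have "g ** h ** (matrix_inv h ** matrix_inv g) = g ** (h ** matrix_inv h) ** matrix_inv g"
    by (simp add: matrix_mul_assoc)
  then show "g ** h ** (matrix_inv h ** matrix_inv g) = mat 1" using g h by simp
  have "matrix_inv h ** matrix_inv g ** (g ** h) = matrix_inv h ** (matrix_inv g ** g) ** h"
    by (simp add: matrix_mul_assoc)
  then show "matrix_inv h ** matrix_inv g ** (g ** h) = mat 1" using g h by simp
qed

lemma inv_inv:
  fixes g :: cmat
  assumes "invertible g"
  shows "matrix_inv (matrix_inv g) = g" "invertible (matrix_inv g)"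
proof -
  have g: "g ** matrix_inv g = mat 1" "matrix_inv g ** g = mat 1" using invertible_inv assms(1) by blast+
  show "matrix_inv (matrix_inv g) = g" using g by (blast intro: matrix_inv_unique')
  show "invertible (matrix_inv g)" using g unfolding invertible_def by blast
qed

lemma conj_class7_closed: "conjclosed (conj_class7 r)"
  unfolding conjclosed_def
proof (intro ballI)
  fix x g assume x: "x \<in> conj_class7 r" and g: "g \<in> G6"
  obtain h where h: "h \<in> G7" "x = h ** r ** matrix_inv h" using x unfolding conj_class7_def by blast
  have g7: "g \<in> G7" using g G6_sub_G7 by blast
  have h': "matrix_inv g ** h \<in> G7" using g7 h(1) unfolding G7_def by (auto intro: gen_group.intros)
  have ig: "invertible g" "invertible h" using g7 h(1) G7_invertible by auto
  have "matrix_inv (matrix_inv g ** h) = matrix_inv h ** g"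
    using inv_mult_inv[OF inv_inv(2)[OF ig(1)] ig(2)] inv_inv(1)[OF ig(1)] by simp
  then have "matrix_inv g ** x ** g = (matrix_inv g ** h) ** r ** matrix_inv (matrix_inv g ** h)"
    using h(2) by (simp add: matrix_mul_assoc)
  then show "matrix_inv g ** x ** g \<in> conj_class7 r" using h' unfolding conj_class7_def by blast
qed

lemma R1_closed: "conjclosed R1" and S_closed: "conjclosed S_cls"
  unfolding R1_def S_cls_def by (rule conj_class7_closed)+

lemma R1_invertible: "y \<in> R1 \<Longrightarrow> invertible y"
  using R1_sub valid_chk phiA_invertible by fastforce

lemma R1inv_closed: "conjclosed R1inv"
  unfolding conjclosed_def
proof (intro ballI)
  fix x g assume x: "x \<in> R1inv" and g: "g \<in> G6"
  obtain y where y: "y \<in> R1" "x = matrix_inv y" using x unfolding R1inv_def by blast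
  have ig: "invertible g" using g G6_sub_G7 G7_invertible by blast
  have iy: "invertible y" using R1_invertible y(1) .
  have z: "matrix_inv g ** y ** g \<in> R1" using R1_closed y(1) g unfolding conjclosed_def by blast
  have "matrix_inv (matrix_inv g ** y ** g) = matrix_inv g ** matrix_inv (matrix_inv g ** y)"
    by (rule inv_mult_inv) (use ig iy inv_inv invertible_mult in auto)
  also have "matrix_inv (matrix_inv g ** y) = matrix_inv y ** g"
    using inv_mult_inv[OF inv_inv(2)[OF ig] iy] inv_inv(1)[OF ig] by simp
  finally have "matrix_inv (matrix_inv g ** y ** g) = matrix_inv g ** x ** g"
    using y(2) by (simp add: matrix_mul_assoc)
  then show "matrix_inv g ** x ** g \<in> R1inv" using z unfolding R1inv_def by (metis image_eqI)
qed

lemma Rprime_closed: "conjclosed Rprime"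
  using R1_closed R1inv_closed unfolding Rprime_def conjclosed_def by blast

lemma trace_phiA: "phiA (k,a,b,c,d) $1$1 + phiA (k,a,b,c,d) $2$2 = cis (of_int k * pi / 6) * of_int a"
  unfolding phiA_def phiM_def by (simp add: field_simps)

lemma S_Rprime_disj: "S_cls \<inter> Rprime = {}"
proof (rule ccontr)
  assume "S_cls \<inter> Rprime \<noteq> {}"
  then obtain M where M: "M \<in> S_cls" "M \<in> Rprime" by blast
  obtain g1 where g1: "g1 \<in> set Sl" "M = phiA g1" using S_sub M(1) by blast
  obtain g2 where g2: "g2 \<in> set Rpl" "M = phiA g2" using Rprime_sub M(2) by blast
  obtain k1 a1 b1 c1 d1 where e1: "g1 = (k1,a1,b1,c1,d1)" by (cases g1) auto
  obtain k2 a2 b2 c2 d2 where e2: "g2 = (k2,a2,b2,c2,d2)" by (cases g2) auto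
  have "a1 = 0" "a2 \<noteq> 0" using trace_chk g1(1) g2(1) e1 e2 by auto
  have "M $1$1 + M $2$2 = cis (of_int k1 * pi / 6) * of_int a1"
    unfolding g1(2) e1 by (rule trace_phiA)
  moreover have "M $1$1 + M $2$2 = cis (of_int k2 * pi / 6) * of_int a2"
    unfolding g2(2) e2 by (rule trace_phiA)
  ultimately have "M $1$1 + M $2$2 = 0" "M $1$1 + M $2$2 \<noteq> 0"
    using \<open>a1 = 0\<close> \<open>a2 \<noteq> 0\<close> by (simp_all add: cis_neq_zero)
  then show False by simp
qed

lemma hurwitz_append: "i + 1 < length U \<Longrightarrow> hurwitz (length P + i) (P @ U) = P @ hurwitz i U"
  unfolding hurwitz_def by (simp add: list_update_append nth_append)

lemma orbit_append: "hurwitz_step\<^sup>*\<^sup>* U U' \<Longrightarrow> hurwitz_step\<^sup>*\<^sup>* (P @ U) (P @ U')"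
proof (induction rule: rtranclp_induct)
  case base
  then show ?case by simp
next
  case (step y z)
  then obtain i where i: "i + 1 < length y" "z = hurwitz i y" unfolding hurwitz_step_def by blast
  then have "hurwitz_step (P @ y) (P @ z)"
    unfolding hurwitz_step_def using hurwitz_append[of i y P] by (intro exI[of _ "length P + i"]) auto
  then show ?case using step.IH by (rule rtranclp.rtrancl_into_rtrancl[rotated])
qed

lemma length_hurwitz: "length (hurwitz i T) = length T"
  unfolding hurwitz_def by simp

lemma hurwitz_G6: "set T \<subseteq> G6 \<Longrightarrow> i + 1 < length T \<Longrightarrow> set (hurwitz i T) \<subseteq> G6"
proof -
  assume a: "set T \<subseteq> G6" "i + 1 < length T"
  then have "T ! i \<in> G6" "T ! (i+1) \<in> G6" by auto
  then have "matrix_inv (T ! (i+1)) ** T ! i ** T ! (i+1) \<in> G6"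
    unfolding G6_def by (auto intro: gen_group.intros)
  then show ?thesis unfolding hurwitz_def using a \<open>T ! (i+1) \<in> G6\<close>
    by (metis (no_types, lifting) insert_subset set_update_subset_insert subset_trans)
qed

lemma orbit_G6: "hurwitz_step\<^sup>*\<^sup>* T T' \<Longrightarrow> set T \<subseteq> G6 \<Longrightarrow> set T' \<subseteq> G6"
  by (induction rule: rtranclp_induct) (auto simp: hurwitz_step_def dest: hurwitz_G6)

lemma orbit_length: "hurwitz_step\<^sup>*\<^sup>* T T' \<Longrightarrow> length T' = length T"
  by (induction rule: rtranclp_induct) (auto simp: hurwitz_step_def length_hurwitz)

lemma move_one:
  "set (A @ a # B) \<subseteq> G6 \<Longrightarrow> \<exists>z. hurwitz_step\<^sup>*\<^sup>* (A @ a # B) (A @ B @ [z]) \<and> (\<forall>C. conjclosed C \<longrightarrow> a \<in> C \<longrightarrow> z \<in> C)"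
proof (induction B arbitrary: A a)
  case Nil
  then show ?case by auto
next
  case (Cons b B)
  define a' where "a' = matrix_inv b ** a ** b"
  have bG: "b \<in> G6" "a \<in> G6" using Cons.prems by auto
  have "hurwitz 0 (a # b # B) = b # a' # B" unfolding hurwitz_def a'_def by simp
  then have st: "hurwitz_step (A @ a # b # B) ((A @ [b]) @ a' # B)"
    unfolding hurwitz_step_def using hurwitz_append[of 0 "a # b # B" A]
    by (intro exI[of _ "length A"]) auto
  have a'G: "a' \<in> G6" using bG unfolding a'_def G6_def by (auto intro: gen_group.intros)
  have "set ((A @ [b]) @ a' # B) \<subseteq> G6" using Cons.prems a'G by auto
  from Cons.IH[OF this] obtain z where z: "hurwitz_step\<^sup>*\<^sup>* ((A @ [b]) @ a' # B) ((A @ [b]) @ B @ [z])"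
    "\<forall>C. conjclosed C \<longrightarrow> a' \<in> C \<longrightarrow> z \<in> C" by blast
  have "\<forall>C. conjclosed C \<longrightarrow> a \<in> C \<longrightarrow> z \<in> C"
    using z(2) bG unfolding conjclosed_def a'_def by blast
  moreover have "hurwitz_step\<^sup>*\<^sup>* (A @ a # b # B) (A @ (b # B) @ [z])"
    using st z(1) by (simp add: converse_rtranclp_into_rtranclp)
  ultimately show ?case by blast
qed

lemma hurA_phi:
  assumes "\<forall>g\<in>set U. valid g" "i + 1 < length U"
  shows "map phiA (hurA i U) = hurwitz i (map phiA U) \<and> (\<forall>g\<in>set (hurA i U). valid g)"
proof -
  have va: "valid (U ! i)" "valid (U ! (i+1))" using assms by auto
  have vi: "valid (invA (U ! (i+1)))" using valid_inv va by blast
  have v1: "valid (mulA (invA (U ! (i+1))) (U ! i))" using valid_mul vi va by blast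
  have v2: "valid (mulA (mulA (invA (U ! (i+1))) (U ! i)) (U ! (i+1)))" using valid_mul v1 va by blast
  have "phiA (mulA (mulA (invA (U ! (i+1))) (U ! i)) (U ! (i+1)))
        = matrix_inv (phiA (U ! (i+1))) ** phiA (U ! i) ** phiA (U ! (i+1))"
    using valid_mul v1 vi va phiA_inv by metis
  then have "map phiA (hurA i U) = hurwitz i (map phiA U)"
    unfolding hurA_def hurwitz_def using assms(2) by (simp add: map_update)
  moreover have "\<forall>g\<in>set (hurA i U). valid g"
    unfolding hurA_def using assms(1) va v2
    by (metis (no_types, lifting) insert_iff set_update_subset_insert subsetD)
  ultimately show ?thesis by blast
qed

lemma applyw_phi:
  "\<forall>g\<in>set U. valid g \<Longrightarrow> \<forall>i\<in>set w. i + 1 < length U \<Longrightarrow>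
   hurwitz_step\<^sup>*\<^sup>* (map phiA U) (map phiA (applyw w U)) \<and> (\<forall>g\<in>set (applyw w U). valid g) \<and> length (applyw w U) = length U"
proof (induction w arbitrary: U)
  case Nil
  then show ?case by simp
next
  case (Cons i w)
  have h: "map phiA (hurA i U) = hurwitz i (map phiA U)" "\<forall>g\<in>set (hurA i U). valid g"
    using hurA_phi Cons.prems by auto
  have l: "length (hurA i U) = length U" unfolding hurA_def by simp
  have st: "hurwitz_step (map phiA U) (map phiA (hurA i U))"
    unfolding hurwitz_step_def using h(1) Cons.prems(2) by auto
  have "hurwitz_step\<^sup>*\<^sup>* (map phiA (hurA i U)) (map phiA (applyw w (hurA i U))) \<and>
     (\<forall>g\<in>set (applyw w (hurA i U)). valid g) \<and> length (applyw w (hurA i U)) = length (hurA i U)"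
    using Cons.IH[OF h(2)] Cons.prems(2) l by auto
  then show ?case using st l by (auto intro: converse_rtranclp_into_rtranclp)
qed

lemma la2_ex: "list_all2 P xs ys \<Longrightarrow> x \<in> set xs \<Longrightarrow> \<exists>y. P x y"
  by (metis in_set_conv_nth list_all2_conv_all_nth)

lemma tail_abs:
  assumes "chk Cl W" "b \<in> set Sl" "c \<in> set Rpl" "y \<in> set Cl" "x \<in> set Cl"
  shows "\<exists>w. good w b c y x"
proof -
  obtain Wb where 1: "list_all2 (\<lambda>c Wc. list_all2 (\<lambda>y Wy. list_all2 (\<lambda>x w. good w b c y x) Cl Wy) Cl Wc) Rpl Wb"
    using la2_ex[OF assms(1)[unfolded chk_def] assms(2)] by blast
  obtain Wc where 2: "list_all2 (\<lambda>y Wy. list_all2 (\<lambda>x w. good w b c y x) Cl Wy) Cl Wc"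
    using la2_ex[OF 1 assms(3)] by blast
  obtain Wy where 3: "list_all2 (\<lambda>x w. good w b c y x) Cl Wy"
    using la2_ex[OF 2 assms(4)] by blast
  show ?thesis using la2_ex[OF 3 assms(5)] by blast
qed

lemma letter_gen:
  assumes "valid a" "valid c"
  shows "valid (letter a c l) \<and> phiA (letter a c l) \<in> gen_group {phiA a, phiA c}"
proof -
  have ia: "phiA (invA a) \<in> gen_group {phiA a, phiA c}"
    using phiA_inv[OF assms(1)] gen_inv[OF gen_base[of "phiA a"]] by (metis insertI1)
  have ic: "phiA (invA c) \<in> gen_group {phiA a, phiA c}"
    using phiA_inv[OF assms(2)] gen_inv[OF gen_base[of "phiA c"]] by (metis insertI1 insertI2)
  have a: "phiA a \<in> gen_group {phiA a, phiA c}" "phiA c \<in> gen_group {phiA a, phiA c}"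
    by (auto intro: gen_base)
  have v: "valid (invA a)" "valid (invA c)" using valid_inv assms by blast+
  show ?thesis unfolding letter.simps using ia ic a v assms
    by (simp del: invA.simps valid.simps)
qed

lemma evw_gen:
  assumes "valid a" "valid c"
  shows "valid (evw a c w) \<and> phiA (evw a c w) \<in> gen_group {phiA a, phiA c}"
proof (induction w)
  case Nil
  then show ?case using valid_one phiA_one by (simp add: gen_one)
next
  case (Cons l w)
  have x: "valid (letter a c l) \<and> phiA (letter a c l) \<in> gen_group {phiA a, phiA c}"
    by (rule letter_gen[OF assms])
  have m: "valid (mulA (letter a c l) (evw a c w)) \<and> phiA (letter a c l) ** phiA (evw a c w) = phiA (mulA (letter a c l) (evw a c w))"
    using valid_mul x Cons.IH by blast
  show ?case unfolding evw.simps using m x Cons.IH by (metis gen_mult)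
qed

lemma F1:
  assumes "a \<in> set Sl" "c \<in> set Rpl"
  shows "mat_s \<in> gen_group {phiA a, phiA c} \<and> mat_t \<in> gen_group {phiA a, phiA c}"
proof -
  have v: "valid a" "valid c" using assms valid_chk by (auto simp: Rpl_def)
  obtain row where 1: "list_all2 (\<lambda>c wp. normA (evw a c (fst wp)) = s_hat \<and> normA (evw a c (snd wp)) = t_hat) Rpl row"
    using la2_ex[OF F1_chk assms(1)] by blast
  obtain wp where 2: "normA (evw a c (fst wp)) = s_hat" "normA (evw a c (snd wp)) = t_hat"
    using la2_ex[OF 1 assms(2)] by blast
  have "mat_s = phiA (evw a c (fst wp))" using 2(1) mat_s_phi phiA_norm by metis
  moreover have "mat_t = phiA (evw a c (snd wp))" using 2(2) mat_t_phi phiA_norm by metis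
  ultimately show ?thesis using evw_gen[OF v, of "fst wp"] evw_gen[OF v, of "snd wp"] by simp
qed

lemma gen_G6:
  assumes "a \<in> set Sl" "c \<in> set Rpl" "phiA a \<in> X" "phiA c \<in> X" "X \<subseteq> G6"
  shows "gen_group X = G6"
proof
  show "gen_group X \<subseteq> G6" unfolding G6_def by (rule gen_group_sub) (use assms(5) G6_def in simp)
  have "gen_group {phiA a, phiA c} \<subseteq> gen_group X"
    by (rule gen_group_sub) (use assms(3,4) in \<open>auto intro: gen_base\<close>)
  then have "{mat_s, mat_t} \<subseteq> gen_group X" using F1[OF assms(1,2)] by blast
  then show "G6 \<subseteq> gen_group X" unfolding G6_def by (rule gen_group_sub)
qed

lemma tail_gen:
  assumes chk: "chk Cl W" and Csub: "\<forall>M\<in>C. \<exists>g\<in>set Cl. M = phiA g" and vC: "\<forall>g\<in>set Cl. valid g"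
    and b: "b \<in> S_cls" and c: "c \<in> Rprime" and y: "y \<in> C" and x: "x \<in> C"
  shows "\<exists>V. hurwitz_step\<^sup>*\<^sup>* [b,c,y] V \<and> length V = 3 \<and> V!2 = x \<and>
     (\<exists>a' c'. a' \<in> set Sl \<and> c' \<in> set Rpl \<and> phiA a' \<in> {V!0, V!1} \<and> phiA c' \<in> {V!0, V!1})"
proof -
  obtain bh where bh: "bh \<in> set Sl" "b = phiA bh" using S_sub b by blast
  obtain ch where ch: "ch \<in> set Rpl" "c = phiA ch" using Rprime_sub c by blast
  obtain yh where yh: "yh \<in> set Cl" "y = phiA yh" using Csub y by blast
  obtain xh where xh: "xh \<in> set Cl" "x = phiA xh" using Csub x by blast
  obtain w where g: "good w bh ch yh xh" using tail_abs[OF chk bh(1) ch(1) yh(1) xh(1)] by blast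
  define Vh where "Vh = applyw w [bh, ch, yh]"
  have v: "\<forall>g\<in>set [bh, ch, yh]. valid g" using bh(1) ch(1) yh(1) vC valid_chk by (auto simp: Rpl_def)
  have gw: "\<forall>i\<in>set w. i < 2" "normA (Vh!2) = xh"
     "(normA (Vh!0) \<in> set Sl \<and> normA (Vh!1) \<in> set Rpl) \<or> (normA (Vh!0) \<in> set Rpl \<and> normA (Vh!1) \<in> set Sl)"
    using g unfolding good_def Vh_def Let_def by auto
  have ap: "hurwitz_step\<^sup>*\<^sup>* (map phiA [bh, ch, yh]) (map phiA Vh)" "length Vh = 3"
  proof -
    have "\<forall>i\<in>set w. i + 1 < length [bh, ch, yh]" using gw(1) by auto
    from applyw_phi[OF v this] show "hurwitz_step\<^sup>*\<^sup>* (map phiA [bh, ch, yh]) (map phiA Vh)" "length Vh = 3"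
      unfolding Vh_def by auto
  qed
  define V where "V = map phiA Vh"
  have V: "length V = 3" "V!0 = phiA (normA (Vh!0))" "V!1 = phiA (normA (Vh!1))" "V!2 = phiA (normA (Vh!2))"
    unfolding V_def using ap(2) phiA_norm by auto
  have "hurwitz_step\<^sup>*\<^sup>* [b,c,y] V" using ap(1) bh ch yh unfolding V_def by simp
  moreover have "V!2 = x" using V(4) gw(2) xh(2) by simp
  moreover have "\<exists>a' c'. a' \<in> set Sl \<and> c' \<in> set Rpl \<and> phiA a' \<in> {V!0, V!1} \<and> phiA c' \<in> {V!0, V!1}"
  proof (rule disjE[OF gw(3)])
    assume h: "normA (Vh!0) \<in> set Sl \<and> normA (Vh!1) \<in> set Rpl"
    show ?thesis by (rule exI[of _ "normA (Vh!0)"], rule exI[of _ "normA (Vh!1)"]) (use h V(2,3) in simp)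
  next
    assume h: "normA (Vh!0) \<in> set Rpl \<and> normA (Vh!1) \<in> set Sl"
    show ?thesis by (rule exI[of _ "normA (Vh!1)"], rule exI[of _ "normA (Vh!0)"]) (use h V(2,3) in simp)
  qed
  ultimately show ?thesis using V(1) by blast
qed

lemma tail_mat:
  assumes "C \<in> {R1, R1inv, S_cls}" "b \<in> S_cls" "c \<in> Rprime" "y \<in> C" "x \<in> C"
  shows "\<exists>V. hurwitz_step\<^sup>*\<^sup>* [b,c,y] V \<and> length V = 3 \<and> V!2 = x \<and>
     (\<exists>a' c'. a' \<in> set Sl \<and> c' \<in> set Rpl \<and> phiA a' \<in> {V!0, V!1} \<and> phiA c' \<in> {V!0, V!1})"
proof -
  have v: "\<forall>g\<in>set Sl. valid g" "\<forall>g\<in>set R1l. valid g" "\<forall>g\<in>set R1il. valid g"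
    using valid_chk by auto
  consider "C = R1" | "C = R1inv" | "C = S_cls" using assms(1) by blast
  then show ?thesis
  proof cases
    case 1
    show ?thesis by (rule tail_gen[OF chk_R1 _ v(2) assms(2,3)]) (use assms(4,5) 1 R1_sub in auto)
  next
    case 2
    show ?thesis by (rule tail_gen[OF chk_R1i _ v(3) assms(2,3)]) (use assms(4,5) 2 R1inv_sub in auto)
  next
    case 3
    show ?thesis by (rule tail_gen[OF chk_S _ v(1) assms(2,3)]) (use assms(4,5) 3 S_sub in auto)
  qed
qed

lemma count_in_filter: "count_in X T = length (filter (\<lambda>r. r \<in> X) T)"
  unfolding count_in_def by (simp add: length_filter_conv_card)

lemma mset_filter_disj:
  assumes "X \<inter> Y = {}"
  shows "mset (filter (\<lambda>r. r \<in> X) T) + mset (filter (\<lambda>r. r \<in> Y) T) \<subseteq># mset T"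
  using assms
proof (induction T)
  case Nil
  then show ?case by simp
next
  case (Cons a T)
  have ad: "\<And>A x. A \<subseteq># add_mset x A" by (metis add_mset_add_single mset_subset_eq_add_left)
  show ?case
    using Cons by (cases "a \<in> X"; cases "a \<in> Y") (auto intro: subset_mset.trans[OF _ ad])
qed

lemma two_in_filter:
  assumes "length xs \<ge> 2"
  shows "\<exists>p q. {#p, q#} \<subseteq># mset xs \<and> p \<in> set xs \<and> q \<in> set xs"
proof -
  obtain p q rest where "xs = p # q # rest" using assms by (cases xs; cases "tl xs") auto
  then show ?thesis by (intro exI[of _ p] exI[of _ q]) simp
qed

lemma pick3:
  assumes "count_in S_cls T \<ge> 2" "count_in Rprime T \<ge> 2" "C \<in> {R1,R1inv,S_cls}" "\<exists>r\<in>set T. r \<in> C"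
  shows "\<exists>b c y. {#b, c, y#} \<subseteq># mset T \<and> b \<in> S_cls \<and> c \<in> Rprime \<and> y \<in> C"
proof -
  define FS where "FS = filter (\<lambda>r. r \<in> S_cls) T"
  define FR where "FR = filter (\<lambda>r. r \<in> Rprime) T"
  have sub: "mset FS + mset FR \<subseteq># mset T" unfolding FS_def FR_def using mset_filter_disj S_Rprime_disj by blast
  have lS: "length FS \<ge> 2" and lR: "length FR \<ge> 2" using assms(1,2) unfolding FS_def FR_def count_in_filter by auto
  consider "C = S_cls" | "C \<subseteq> Rprime" using assms(3) unfolding Rprime_def by blast
  then show ?thesis
  proof cases
    case 1
    obtain p q where pq: "{#p, q#} \<subseteq># mset FS" "p \<in> set FS" "q \<in> set FS" using two_in_filter lS by blast
    obtain r where r: "r \<in> set FR" using lR by (cases FR) auto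
    have "{#r#} \<subseteq># mset FR" using r by (simp add: mset_subset_eq_single)
    then have "{#p, q#} + {#r#} \<subseteq># mset FS + mset FR" by (rule subset_mset.add_mono[OF pq(1)])
    then have "{#p, q#} + {#r#} \<subseteq># mset T" using sub by (rule subset_mset.trans)
    then have "{#p, r, q#} \<subseteq># mset T" by (simp add: add_mset_commute)
    moreover have "p \<in> S_cls" "q \<in> S_cls" "r \<in> Rprime" using pq r unfolding FS_def FR_def by auto
    ultimately show ?thesis using 1 by blast
  next
    case 2
    obtain y where y: "y \<in> set T" "y \<in> C" using assms(4) by blast
    have yR: "y \<in> set FR" using y 2 unfolding FR_def by auto
    have "length (remove1 y FR) \<ge> 1" using lR yR by (simp add: length_remove1)
    then obtain c where c: "c \<in> set (remove1 y FR)" by (cases "remove1 y FR") auto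
    have "{#y, c#} \<subseteq># mset FR"
    proof -
      have c1: "{#c#} \<subseteq># mset (remove1 y FR)" using c by (metis in_multiset_in_set mset_subset_eq_single)
      then have "add_mset y {#c#} \<subseteq># add_mset y (mset (remove1 y FR))"
        by (simp only: mset_subset_eq_add_mset_cancel)
      moreover have "add_mset y (mset (remove1 y FR)) = mset FR"
        using yR by (metis insert_DiffM mset_remove1 in_multiset_in_set)
      ultimately show ?thesis by metis
    qed
    moreover obtain b where b: "b \<in> set FS" using lS by (cases FS) auto
    moreover have "{#b#} \<subseteq># mset FS" using b by (simp add: mset_subset_eq_single)
    ultimately have "{#b#} + {#y, c#} \<subseteq># mset FS + mset FR" by (metis subset_mset.add_mono)
    then have "{#b#} + {#y, c#} \<subseteq># mset T" using sub by (rule subset_mset.trans)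
    then have "{#b, c, y#} \<subseteq># mset T" by (simp add: add_mset_commute)
    moreover have "c \<in> set FR" using c set_remove1_subset by fastforce
    then have "c \<in> Rprime" unfolding FR_def by simp
    moreover have "b \<in> S_cls" using b unfolding FS_def by simp
    ultimately show ?thesis using y(2) by blast
  qed
qed

lemma move3:
  assumes "set T \<subseteq> G6" "{#b0, c0, y0#} \<subseteq># mset T"
  shows "\<exists>P b c y. hurwitz_step\<^sup>*\<^sup>* T (P @ [b,c,y]) \<and> (\<forall>C. conjclosed C \<longrightarrow> b0 \<in> C \<longrightarrow> b \<in> C)
     \<and> (\<forall>C. conjclosed C \<longrightarrow> c0 \<in> C \<longrightarrow> c \<in> C) \<and> (\<forall>C. conjclosed C \<longrightarrow> y0 \<in> C \<longrightarrow> y \<in> C)"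
proof -
  have "b0 \<in># mset T" using assms(2) by (meson mset_subset_eqD union_single_eq_member)
  then have "b0 \<in> set T" by simp
  then obtain A B where T: "T = A @ b0 # B" by (meson split_list)
  obtain b1 where b1: "hurwitz_step\<^sup>*\<^sup>* T (A @ B @ [b1])" "\<forall>C. conjclosed C \<longrightarrow> b0 \<in> C \<longrightarrow> b1 \<in> C"
    using move_one[of A b0 B] assms(1) T by blast
  have "add_mset b0 {#c0, y0#} \<subseteq># add_mset b0 (mset (A @ B))" using assms(2) T by simp
  then have m1: "{#c0, y0#} \<subseteq># mset (A @ B)" by (simp only: mset_subset_eq_add_mset_cancel)
  then have "c0 \<in># mset (A @ B)" by (meson mset_subset_eqD union_single_eq_member)
  then have "c0 \<in> set (A @ B)" by (simp only: in_multiset_in_set)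
  then obtain A2 B2 where AB: "A @ B = A2 @ c0 # B2" by (meson split_list)
  have G1: "set (A @ B @ [b1]) \<subseteq> G6" using orbit_G6 b1(1) assms(1) by blast
  have T1: "A @ B @ [b1] = A2 @ c0 # (B2 @ [b1])" using AB by simp
  obtain c1 where c1: "hurwitz_step\<^sup>*\<^sup>* (A2 @ c0 # (B2 @ [b1])) (A2 @ (B2 @ [b1]) @ [c1])"
     "\<forall>C. conjclosed C \<longrightarrow> c0 \<in> C \<longrightarrow> c1 \<in> C"
    using move_one[of A2 c0 "B2 @ [b1]"] G1 T1 by auto
  have "add_mset c0 {#y0#} \<subseteq># add_mset c0 (mset (A2 @ B2))" using m1 AB
    by (metis add_mset_commute mset.simps(2) mset_append union_mset_add_mset_right)
  then have "{#y0#} \<subseteq># mset (A2 @ B2)" by (simp only: mset_subset_eq_add_mset_cancel)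
  then have "y0 \<in> set (A2 @ B2)" by (simp add: in_multiset_in_set)
  then obtain A3 B3 where AB2: "A2 @ B2 = A3 @ y0 # B3" by (meson split_list)
  have G2: "set (A2 @ (B2 @ [b1]) @ [c1]) \<subseteq> G6" using orbit_G6 c1(1) G1 T1 by metis
  have T2: "A2 @ (B2 @ [b1]) @ [c1] = A3 @ y0 # (B3 @ [b1, c1])" using AB2
    by (metis append.assoc append_Cons append_Nil)
  obtain y1 where y1: "hurwitz_step\<^sup>*\<^sup>* (A3 @ y0 # (B3 @ [b1, c1])) (A3 @ (B3 @ [b1, c1]) @ [y1])"
     "\<forall>C. conjclosed C \<longrightarrow> y0 \<in> C \<longrightarrow> y1 \<in> C"
  proof -
    have G2': "set (A3 @ y0 # (B3 @ [b1, c1])) \<subseteq> G6" using G2 unfolding T2 .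
    show ?thesis using move_one[OF G2'] that by blast
  qed
  from b1(1) have o1: "hurwitz_step\<^sup>*\<^sup>* T (A2 @ c0 # (B2 @ [b1]))" by (simp only: T1)
  have o2: "hurwitz_step\<^sup>*\<^sup>* T (A2 @ (B2 @ [b1]) @ [c1])" using o1 c1(1) by (rule rtranclp_trans)
  then have o3: "hurwitz_step\<^sup>*\<^sup>* T (A3 @ y0 # (B3 @ [b1, c1]))" by (simp only: T2)
  have o4: "hurwitz_step\<^sup>*\<^sup>* T (A3 @ (B3 @ [b1, c1]) @ [y1])" using o3 y1(1) by (rule rtranclp_trans)
  have "A3 @ (B3 @ [b1, c1]) @ [y1] = (A3 @ B3) @ [b1, c1, y1]" by simp
  then have "hurwitz_step\<^sup>*\<^sup>* T ((A3 @ B3) @ [b1, c1, y1])" using o4 by simp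
  then show ?thesis using b1(2) c1(2) y1(2) by blast
qed

theorem proposition3p13:
  fixes T :: "cmat list" and x :: cmat and C :: "cmat set"
  assumes "\<forall>r \<in> set T. r \<in> G6 \<and> is_reflection r"
    and "count_in Rprime T \<ge> 2"
    and "count_in S_cls T \<ge> 2"
    and "C \<in> {R1, R1inv, S_cls}"
    and "x \<in> C"
    and "\<exists>r \<in> set T. r \<in> C"
  shows "\<exists>T' \<in> hurwitz_orbit T. last T' = x \<and> gen_group (set (butlast T')) = G6"
proof -
  have TG: "set T \<subseteq> G6" using assms(1) by blast
  obtain b0 c0 y0 where p: "{#b0, c0, y0#} \<subseteq># mset T" "b0 \<in> S_cls" "c0 \<in> Rprime" "y0 \<in> C"
    using pick3[OF assms(3,2,4,6)] by blast
  obtain P b c y where m: "hurwitz_step\<^sup>*\<^sup>* T (P @ [b,c,y])"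
    "\<forall>C. conjclosed C \<longrightarrow> b0 \<in> C \<longrightarrow> b \<in> C" "\<forall>C. conjclosed C \<longrightarrow> c0 \<in> C \<longrightarrow> c \<in> C"
    "\<forall>C. conjclosed C \<longrightarrow> y0 \<in> C \<longrightarrow> y \<in> C"
    using move3[OF TG p(1)] by blast
  have Ccl: "conjclosed C" using assms(4) R1_closed R1inv_closed S_closed by blast
  have bcy: "b \<in> S_cls" "c \<in> Rprime" "y \<in> C"
    using m(2-4) p(2-4) S_closed Rprime_closed Ccl by blast+
  obtain V a' c' where V: "hurwitz_step\<^sup>*\<^sup>* [b,c,y] V" "length V = 3" "V!2 = x"
    "a' \<in> set Sl" "c' \<in> set Rpl" "phiA a' \<in> {V!0, V!1}" "phiA c' \<in> {V!0, V!1}"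
    using tail_mat[OF assms(4) bcy assms(5)] by blast
  define T' where "T' = P @ V"
  have orb: "hurwitz_step\<^sup>*\<^sup>* T T'"
    using m(1) orbit_append[OF V(1), of P] unfolding T'_def by (rule rtranclp_trans)
  obtain v0 v1 v2 where V3: "V = [v0, v1, v2]"
    using V(2) by (auto simp: numeral_3_eq_3 length_Suc_conv)
  have last: "last T' = x" unfolding T'_def using V3 V(3) by simp
  have bl: "butlast T' = P @ [v0, v1]" unfolding T'_def using V3 by (simp add: butlast_append)
  have T'G: "set T' \<subseteq> G6" using orbit_G6 orb TG by blast
  have "gen_group (set (butlast T')) = G6"
  proof (rule gen_G6[OF V(4,5)])
    show "phiA a' \<in> set (butlast T')" "phiA c' \<in> set (butlast T')" using V(6,7) bl V3 by auto
    show "set (butlast T') \<subseteq> G6" using T'G by (meson in_set_butlastD subset_iff)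
  qed
  moreover have "T' \<in> hurwitz_orbit T" unfolding hurwitz_orbit_def using orb by simp
  ultimately show ?thesis using last by blast
qed


end
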